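(* For any $h,v$ with $hv=n^2$, there is an $[h,v]$-scheme for \textsc{InducedEdgeCount} on $n$-vertex graphs.
   Context: Annotated streaming model (schemes): a space-bounded Verifier reads an input stream $\sigma$; after the stream ends, an all-powerful Prover sends a help message to the Verifier as a stream. A scheme for a function $f$ consists of the Verifier's randomized streaming algorithm, the honest Prover's help function, and the Verifier's output procedure, outputting a value in $\mathrm{range}(f)\cup\{\bot\}$ ($\bot$ = reject), with perfect completeness (honest help makes the Verifier output $f(\sigma)$ with probability 1) and soundness error at most $1/3$ (for every $\sigma$ and every help message, the probability of outputting a value outside $\{f(\sigma),\bot\}$ is at most $1/3$). An $[h,v]$-scheme uses $\tilde{O}(h)$ bits of help and $\tilde{O}(v)$ bits of Verifier space, where $\tilde{O}$ hides factors polynomial in $\log n$. \textsc{InducedEdgeCount}: the input stream consists first of the edges of a graph $G=(V,E)$ with $V=[n]$, followed by a stream of vertex subsets $U_1,\dots,U_\ell\subseteq V$ (for some $\ell\in\mathbb{N}$): the vertices of $U_1$ in arbitrary order, then a delimiter, then the vertices of $U_2$ in arbitrary order, and so on. The sets need not be disjoint. The desired output is $\sum_{i=1}^{\ell}|E(G[U_i])|$, the total number of edges of the induced subgraphs $G[U_1],\dots,G[U_\ell]$. *)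

theory Defs
  imports "HOL-Probability.Probability"
begin

datatype tok = Edge nat nat | Vert nat | Delim

definition valid_edges :: "nat \<Rightarrow> (nat \<times> nat) list \<Rightarrow> bool" where
  "valid_edges n es \<longleftrightarrow>
     (\<forall>(u,w)\<in>set es. u \<noteq> w \<and> u < n \<and> w < n) \<and>
     distinct (map (\<lambda>(u,w). {u,w}) es)"

definition edge_set :: "(nat \<times> nat) list \<Rightarrow> nat set set" where
  "edge_set es = (\<lambda>(u,w). {u,w}) ` set es"

definition valid_sets :: "nat \<Rightarrow> nat list list \<Rightarrow> bool" where
  "valid_sets n Us \<longleftrightarrow> (\<forall>U\<in>set Us. distinct U \<and> (\<forall>x\<in>set U. x < n))"

fun sets_stream :: "nat list list \<Rightarrow> tok list" where
  "sets_stream [] = []"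
| "sets_stream [U] = map Vert U"
| "sets_stream (U # Us) = map Vert U @ [Delim] @ sets_stream Us"

definition iec_stream :: "(nat \<times> nat) list \<Rightarrow> nat list list \<Rightarrow> tok list" where
  "iec_stream es Us =
     map (\<lambda>(u,w). Edge u w) es @ sets_stream Us"

definition iec_value :: "(nat \<times> nat) list \<Rightarrow> nat list list \<Rightarrow> nat" where
  "iec_value es Us = (\<Sum>U\<leftarrow>Us. card {e \<in> edge_set es. e \<subseteq> set U})"

text \<open>It reads the input stream (tokens), then the help stream (bits), with fresh
  randomness allowed in every step, and finally outputs a value or None (= reject).\<close>
record verifier =
  v_init :: "bool list pmf"
  v_step :: "tok \<Rightarrow> bool list \<Rightarrow> bool list pmf"
  v_hstep :: "bool \<Rightarrow> bool list \<Rightarrow> bool list pmf"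
  v_out :: "bool list \<Rightarrow> nat option"

fun run_pmf :: "('a \<Rightarrow> bool list \<Rightarrow> bool list pmf) \<Rightarrow> 'a list \<Rightarrow> bool list \<Rightarrow> bool list pmf" where
  "run_pmf f [] s = return_pmf s"
| "run_pmf f (x # xs) s = bind_pmf (f x s) (run_pmf f xs)"

definition v_result :: "verifier \<Rightarrow> tok list \<Rightarrow> bool list \<Rightarrow> nat option pmf" where
  "v_result V \<sigma> H =
     map_pmf (v_out V)
       (bind_pmf (v_init V) (\<lambda>s0. bind_pmf (run_pmf (v_step V) \<sigma> s0) (run_pmf (v_hstep V) H)))"

definition space_bounded :: "verifier \<Rightarrow> real \<Rightarrow> bool" where
  "space_bounded V s \<longleftrightarrow>
     (\<forall>x\<in>set_pmf (v_init V). real (length x) \<le> s) \<and>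
     (\<forall>t st. \<forall>x\<in>set_pmf (v_step V t st). real (length x) \<le> s) \<and>
     (\<forall>b st. \<forall>x\<in>set_pmf (v_hstep V b st). real (length x) \<le> s)"

text \<open>A scheme for InducedEdgeCount on n-vertex graphs (with at most L vertex
  subsets), with help length at most hb and verifier space at most sb:
  perfect completeness and soundness error at most 1/3.\<close>
definition iec_scheme ::
  "nat \<Rightarrow> nat \<Rightarrow> real \<Rightarrow> real \<Rightarrow> verifier \<Rightarrow> (tok list \<Rightarrow> bool list) \<Rightarrow> bool" where
  "iec_scheme n L hb sb V P \<longleftrightarrow>
     space_bounded V sb \<and>
     (\<forall>es Us. valid_edges n es \<longrightarrow> valid_sets n Us \<longrightarrow> length Us \<le> L \<longrightarrow>
        (let \<sigma> = iec_stream es Us; f = iec_value es Us in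
          real (length (P \<sigma>)) \<le> hb \<and>
          measure_pmf.prob (v_result V \<sigma> (P \<sigma>)) {Some f} = 1 \<and>
          (\<forall>H. measure_pmf.prob (v_result V \<sigma> H) {r. r \<noteq> Some f \<and> r \<noteq> None} \<le> 1/3)))"

end

theory Submission
  imports Defs "HOL-Computational_Algebra.Primes" "HOL-Computational_Algebra.Polynomial"
begin

lemma mult_card:
  fixes q k K :: nat
  assumes q: "prime q" and k: "k > 0" and kK: "k < q ^ (K+1)"
  shows "multiplicity q k = card {i\<in>{1..K}. q^i dvd k}"
proof -
  have "\<not> q^(K+1) dvd k"
  proof
    assume "q^(K+1) dvd k"
    hence "q^(K+1) \<le> k" using k by (rule dvd_imp_le)
    thus False using kK by simp
  qed
  have iff: "q^i dvd k \<longleftrightarrow> i \<le> multiplicity q k" for i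
  proof -
    have k0: "k \<noteq> 0" using k by simp
    have nu: "\<not> is_unit q" using q not_prime_unit by blast
    show ?thesis by (rule power_dvd_iff_le_multiplicity[OF k0 nu])
  qed
  have le: "multiplicity q k \<le> K" using iff[of "K+1"] \<open>\<not> q^(K+1) dvd k\<close> by simp
  have "{i\<in>{1..K}. q^i dvd k} = {1..multiplicity q k}"
  proof (rule set_eqI)
    fix i show "i \<in> {i\<in>{1..K}. q^i dvd k} \<longleftrightarrow> i \<in> {1..multiplicity q k}"
      using le iff[of i] by auto
  qed
  thus ?thesis by simp
qed

lemma Suc_div_split:
  fixes n d :: nat
  assumes "d > 0"
  shows "Suc n div d = n div d + (if d dvd Suc n then 1 else 0)"
  using assms by (auto simp: div_Suc dvd_eq_mod_eq_0)

lemma card_filter_sum: "finite A \<Longrightarrow> card {i\<in>A. P i} = (\<Sum>i\<in>A. if P i then 1 else 0)"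
  by (simp add: sum.If_cases Collect_conj_eq Int_commute)

lemma legendre:
  fixes q K :: nat
  assumes q: "prime q"
  shows "n < q ^ (K+1) \<Longrightarrow> multiplicity q (fact n :: nat) = (\<Sum>i\<in>{1..K}. n div q^i)"
proof (induction n)
  case 0
  then show ?case by simp
next
  case (Suc n)
  have q0: "q > 0" using q prime_gt_0_nat by blast
  have "multiplicity q (fact (Suc n) :: nat) = multiplicity q (Suc n * fact n :: nat)"
    by (simp add: fact_Suc)
  also have "\<dots> = multiplicity q (Suc n) + multiplicity q (fact n :: nat)"
    using q by (intro prime_elem_multiplicity_mult_distrib) auto
  also have "multiplicity q (Suc n) = card {i\<in>{1..K}. q^i dvd Suc n}"
    using Suc.prems q by (intro mult_card) auto
  also have "\<dots> = (\<Sum>i\<in>{1..K}. if q^i dvd Suc n then 1 else 0)"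
    by (rule card_filter_sum) simp
  also have "multiplicity q (fact n :: nat) = (\<Sum>i\<in>{1..K}. n div q^i)"
    using Suc by simp
  also have "(\<Sum>i\<in>{1..K}. if q^i dvd Suc n then 1 else 0) + (\<Sum>i\<in>{1..K}. n div q^i)
      = (\<Sum>i\<in>{1..K}. Suc n div q^i)"
    by (subst sum.distrib[symmetric], rule sum.cong, simp, subst Suc_div_split) (use q0 in auto)
  finally show ?case .
qed

lemma central_binom_mult:
  fixes q m :: nat
  assumes q: "prime q" and m: "m > 0"
  shows "q ^ multiplicity q (2*m choose m) \<le> 2*m"
proof -
  define K where "K = 2*m"
  have q2: "q \<ge> 2" using q prime_ge_2_nat by blast
  have lt: "2*m < q^(K+1)"
  proof -
    have "2*m < 2^(2*m)" by simp
    also have "\<dots> \<le> q^(2*m)" using q2 by (simp add: power_mono)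
    also have "\<dots> \<le> q^(K+1)" using q2 K_def by (intro power_increasing) auto
    finally show ?thesis .
  qed
  have ltm: "m < q^(K+1)" using lt by simp
  have fl: "fact m * fact m * (2*m choose m) = (fact (2*m) :: nat)"
    using binomial_fact_lemma[of m "2*m"] by simp
  have "multiplicity q (fact (2*m) :: nat) = multiplicity q (fact m :: nat) + multiplicity q (fact m :: nat) + multiplicity q (2*m choose m)"
  proof -
    have "multiplicity q (fact (2*m) :: nat) = multiplicity q ((fact m * fact m) * (2*m choose m) :: nat)"
      using fl by simp
    also have "\<dots> = multiplicity q (fact m * fact m :: nat) + multiplicity q (2*m choose m)"
      using q by (intro prime_elem_multiplicity_mult_distrib) auto
    also have "multiplicity q (fact m * fact m :: nat) = multiplicity q (fact m :: nat) + multiplicity q (fact m :: nat)"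
      using q by (intro prime_elem_multiplicity_mult_distrib) auto
    finally show ?thesis .
  qed
  hence eq: "multiplicity q (2*m choose m) = (\<Sum>i\<in>{1..K}. 2*m div q^i) - 2 * (\<Sum>i\<in>{1..K}. m div q^i)"
    using legendre[OF q lt] legendre[OF q ltm] by simp
  have trm: "2*m div q^i - 2 * (m div q^i) \<le> (if q^i \<le> 2*m then 1 else 0)" for i
  proof -
    have qi: "q^i > 0" using q2 by simp
    have a: "2*m div q^i \<le> 2 * (m div q^i) + 1"
    proof -
      define Q D R where "Q = q^i" and "D = m div q^i" and "R = m mod q^i"
      have mm: "m = D * Q + R" unfolding Q_def D_def R_def by (rule div_mult_mod_eq[symmetric])
      have "2*m = 2 * R + (2 * D) * Q"
        by (simp add: mm algebra_simps)
      hence "2*m = 2 * (m mod q^i) + (2 * (m div q^i)) * q^i" unfolding Q_def D_def R_def .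
      hence "2*m div q^i = 2 * (m div q^i) + (2 * (m mod q^i)) div q^i"
        using div_mult_self1[of "q^i" "2*(m mod q^i)" "2*(m div q^i)"] qi by simp
      moreover have "(2 * (m mod q^i)) div q^i \<le> 1"
      proof -
        have "2 * (m mod q^i) < 2 * q^i" using qi by simp
        hence "(2 * (m mod q^i)) div q^i < 2" using qi
          by (simp add: div_less_iff_less_mult)
        thus ?thesis by simp
      qed
      ultimately show ?thesis by simp
    qed
    show ?thesis
    proof (cases "q^i \<le> 2*m")
      case True then show ?thesis using a by simp
    next
      case False then show ?thesis by simp
    qed
  qed
  have "(\<Sum>i\<in>{1..K}. 2*m div q^i) - 2 * (\<Sum>i\<in>{1..K}. m div q^i)
        \<le> (\<Sum>i\<in>{1..K}. 2*m div q^i - 2 * (m div q^i))"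
  proof -
    have "(\<Sum>i\<in>{1..K}. 2*m div q^i) \<le> (\<Sum>i\<in>{1..K}. (2*m div q^i - 2 * (m div q^i)) + 2 * (m div q^i))"
      by (intro sum_mono) simp
    also have "\<dots> = (\<Sum>i\<in>{1..K}. 2*m div q^i - 2 * (m div q^i)) + 2 * (\<Sum>i\<in>{1..K}. m div q^i)"
      by (simp add: sum.distrib sum_distrib_left)
    finally show ?thesis by simp
  qed
  also have "\<dots> \<le> (\<Sum>i\<in>{1..K}. if q^i \<le> 2*m then 1 else 0)"
    by (intro sum_mono trm)
  also have "\<dots> = card {i\<in>{1..K}. q^i \<le> 2*m}"
    by (rule card_filter_sum[symmetric]) simp
  finally have le: "multiplicity q (2*m choose m) \<le> card {i\<in>{1..K}. q^i \<le> 2*m}"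
    using eq by simp
  show ?thesis
  proof (rule ccontr)
    assume "\<not> ?thesis"
    hence big: "q ^ multiplicity q (2*m choose m) > 2*m" by simp
    define j where "j = multiplicity q (2*m choose m)"
    have "{i\<in>{1..K}. q^i \<le> 2*m} \<subseteq> {1..<j}"
    proof
      fix i assume "i \<in> {i\<in>{1..K}. q^i \<le> 2*m}"
      hence i: "i \<ge> 1" "q^i \<le> 2*m" by auto
      have "q^i < q^j" using i big j_def by simp
      hence "i < j" using q2 by (simp add: power_strict_increasing_iff)
      thus "i \<in> {1..<j}" using i by simp
    qed
    hence "card {i\<in>{1..K}. q^i \<le> 2*m} \<le> j - 1"
      by (metis card_atLeastLessThan card_mono finite_atLeastLessThan)
    moreover have "j \<ge> 1" using big j_def m by (cases j) auto
    ultimately show False using le j_def by simp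
  qed
qed

lemma two_pow_big: "(M::nat) \<ge> 7 \<Longrightarrow> 2 * M^2 < 2^M"
proof (induction M rule: dec_induct)
  case base then show ?case by simp
next
  case (step M)
  have "2 * (Suc M)^2 = 2*M^2 + 4*M + 2" by (simp add: power2_eq_square)
  also have "\<dots> \<le> 2 * (2 * M^2)"
  proof -
    have "7*M \<le> M*M" using step(1) mult_le_mono1 by blast
    thus ?thesis using step unfolding power2_eq_square by linarith
  qed
  also have "\<dots> < 2 * 2^M" using step by simp
  finally show ?case by simp
qed

lemma prime_in_range:
  fixes M :: nat
  assumes M: "M \<ge> 7"
  shows "\<exists>p. prime p \<and> M < p \<and> p \<le> 2 * M^2"
proof (rule ccontr)
  assume no: "\<not> ?thesis"
  define m where "m = M^2"
  have m0: "m > 0" using M m_def by simp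
  define C where "C = (2*m choose m)"
  have C0: "C \<noteq> 0" using C_def by simp
  have pf: "prime_factors C \<subseteq> {2..M}"
  proof
    fix q assume qin: "q \<in> prime_factors C"
    hence q: "prime q" "q dvd C" by auto
    have "fact m * fact m * C = (fact (2*m) :: nat)" using binomial_fact_lemma[of m "2*m"] C_def
      by simp
    hence "C dvd fact (2*m)" by (metis dvd_triv_right)
    hence "q dvd fact (2*m)" using q(2) dvd_trans by blast
    hence "q \<le> 2*m" using prime_dvd_fact_iff[OF q(1)] by simp
    hence qm: "q \<le> 2*M^2" using m_def by simp
    have "q \<le> M"
    proof (rule ccontr)
      assume "\<not> q \<le> M"
      hence "prime q \<and> M < q \<and> q \<le> 2*M^2" using q(1) qm by simp
      thus False using no by blast
    qed
    thus "q \<in> {2..M}" using prime_ge_2_nat[OF q(1)] by simp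
  qed
  have "C = (\<Prod>q\<in>prime_factors C. q ^ multiplicity q C)"
    using prod_prime_factors[OF C0] by simp
  also have "\<dots> \<le> (\<Prod>q\<in>prime_factors C. 2*m)"
  proof (rule prod_mono)
    fix q assume "q \<in> prime_factors C"
    hence "prime q" by auto
    thus "0 \<le> q ^ multiplicity q C \<and> q ^ multiplicity q C \<le> 2*m"
      using central_binom_mult[of q m] m0 unfolding C_def by simp
  qed
  also have "\<dots> = (2*m) ^ card (prime_factors C)" by simp
  also have "\<dots> \<le> (2*m) ^ M"
  proof -
    have "card (prime_factors C) \<le> card {2..M}" using pf by (intro card_mono) auto
    hence "card (prime_factors C) \<le> M" by simp
    thus ?thesis using m0 by (intro power_increasing) auto
  qed
  finally have up: "C \<le> (2*m)^M" .
  have "(2::real)^m = (real (2*m) / real m) ^ m" using m0 by simp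
  also have "\<dots> \<le> real C" unfolding C_def by (rule binomial_ge_n_over_k_pow_k) simp
  finally have lo: "2^m \<le> C" by (simp flip: of_nat_le_iff)
  have "(2*m)^M < (2^M)^M"
    using two_pow_big[OF M] M m_def by (intro power_strict_mono) auto
  also have "\<dots> = 2^m" by (simp add: m_def power2_eq_square power_mult)
  finally show False using up lo by simp
qed

lemma card_insert_le_Suc: "finite A \<Longrightarrow> card (insert x A) \<le> Suc (card A)"
  by (simp add: card_insert_if)

lemma roots_mod_p_aux:
  fixes p :: int and q :: "int poly"
  assumes p: "prime p"
  shows "degree q = n \<Longrightarrow> (\<exists>k. \<not> p dvd coeff q k) \<Longrightarrow> card {r\<in>{0..<p}. p dvd poly q r} \<le> n"
proof (induction n arbitrary: q)
  case 0
  have "{r\<in>{0..<p}. p dvd poly q r} = {}"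
  proof (rule ccontr)
    assume "{r\<in>{0..<p}. p dvd poly q r} \<noteq> {}"
    then obtain r where "p dvd poly q r" by auto
    moreover have "poly q r = coeff q 0"
    proof -
      have "q = [:coeff q 0:]" using 0 degree_0_id by metis
      then obtain c where c: "q = [:c:]" by blast
      thus ?thesis by simp
    qed
    ultimately have "p dvd coeff q 0" by simp
    moreover have "coeff q k = 0" if "k > 0" for k using 0(1) that coeff_eq_0[of q k] by simp
    ultimately show False using 0(2) by (metis dvd_0_right not_gr0)
  qed
  then show ?case by (metis card.empty order_refl)
next
  case (Suc n)
  show ?case
  proof (cases "{r\<in>{0..<p}. p dvd poly q r} = {}")
    case True then show ?thesis by (metis card.empty zero_le)
  next
    case False
    then obtain r0 where r0: "r0 \<in> {0..<p}" "p dvd poly q r0" by auto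
    define q' where "q' = synthetic_div q r0"
    have decomp: "q = [:-r0, 1:] * q' + [:poly q r0:]"
      unfolding q'_def by (rule synthetic_div_correct'[symmetric])
    have dq': "degree q' = n" using Suc.prems(1) unfolding q'_def by (simp add: degree_synthetic_div)
    have nz': "\<exists>k. \<not> p dvd coeff q' k"
    proof (rule ccontr)
      assume "\<not> ?thesis"
      hence all: "\<forall>k. p dvd coeff q' k" by simp
      define q'' where "q'' = map_poly (\<lambda>c. c div p) q'"
      have "q' = smult p q''"
        by (rule poly_eqI) (use all in \<open>simp add: q''_def coeff_map_poly\<close>)
      obtain c where c: "poly q r0 = p * c" using r0(2) by (auto elim: dvdE)
      have "q = [:-r0, 1:] * q' + [:poly q r0:]" by (rule decomp)
      also have "\<dots> = [:-r0, 1:] * smult p q'' + smult p [:c:]"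
        using \<open>q' = smult p q''\<close> c by simp
      also have "\<dots> = smult p ([:-r0, 1:] * q'' + [:c:])" by (simp add: smult_add_right)
      finally have "q = smult p ([:-r0, 1:] * q'' + [:c:])" .
      hence "\<forall>k. p dvd coeff q k" by simp
      thus False using Suc.prems(2) by blast
    qed
    have IH: "card {r\<in>{0..<p}. p dvd poly q' r} \<le> n" using Suc.IH[OF dq' nz'] .
    have sub: "{r\<in>{0..<p}. p dvd poly q r} \<subseteq> insert r0 {r\<in>{0..<p}. p dvd poly q' r}"
    proof
      fix r assume rin: "r \<in> {r\<in>{0..<p}. p dvd poly q r}"
      define c0 where "c0 = poly q r0"
      have dc: "q = [:-r0, 1:] * q' + [:c0:]" using decomp c0_def by simp
      have "poly q r = poly ([:-r0, 1:] * q' + [:c0:]) r" using dc by simp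
      also have "\<dots> = (r - r0) * poly q' r + c0" by (simp add: algebra_simps)
      finally have ev: "poly q r = (r - r0) * poly q' r + c0" .
      have e2: "(r - r0) * poly q' r = poly q r - c0" using ev by simp
      have "p dvd poly q r - c0" using rin r0(2) c0_def by (simp add: dvd_diff)
      hence "p dvd (r - r0) * poly q' r" using e2 by simp
      hence "p dvd (r - r0) \<or> p dvd poly q' r" using p by (simp add: prime_dvd_mult_iff)
      moreover have "p dvd (r - r0) \<Longrightarrow> r = r0"
      proof -
        assume d: "p dvd (r - r0)"
        have "\<bar>r - r0\<bar> < p" using rin r0(1) by auto
        show "r = r0"
        proof (rule ccontr)
          assume "r \<noteq> r0"
          hence "\<bar>p\<bar> \<le> \<bar>r - r0\<bar>" using dvd_imp_le_int[of "r - r0" p] d by simp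
          thus False using \<open>\<bar>r - r0\<bar> < p\<close> by simp
        qed
      qed
      ultimately show "r \<in> insert r0 {r\<in>{0..<p}. p dvd poly q' r}" using rin by auto
    qed
    have fin: "finite {r\<in>{0..<p}. p dvd poly q' r}" by (rule finite_subset[of _ "{0..<p}"]) auto
    have "card {r\<in>{0..<p}. p dvd poly q r} \<le> card (insert r0 {r\<in>{0..<p}. p dvd poly q' r})"
      by (rule card_mono[OF _ sub]) (use fin in simp)
    also have "\<dots> \<le> Suc (card {r\<in>{0..<p}. p dvd poly q' r})"
      by (rule card_insert_le_Suc[OF fin])
    finally show ?thesis using IH by simp
  qed
qed

lemma roots_mod_p_sum:
  fixes p :: int and c :: "nat \<Rightarrow> int"
  assumes p: "prime p" and K: "K0 < N" and nd: "\<not> p dvd c K0"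
  shows "card {r\<in>{0..<p}. p dvd (\<Sum>k<N. c k * r^k)} \<le> N - 1"
proof -
  define q where "q = (\<Sum>k<N. monom (c k) k)"
  have pq: "poly q r = (\<Sum>k<N. c k * r^k)" for r
    by (simp add: q_def poly_sum poly_monom)
  have cq: "coeff q k = (if k < N then c k else 0)" for k
    by (simp add: q_def coeff_sum coeff_monom)
  have dq: "degree q \<le> N - 1"
    by (rule degree_le) (auto simp: cq)
  have "\<exists>k. \<not> p dvd coeff q k" using K nd cq by metis
  hence "card {r\<in>{0..<p}. p dvd poly q r} \<le> degree q"
    using roots_mod_p_aux[OF p refl] by blast
  thus ?thesis using dq pq by simp
qed

record vst =
  rr :: nat
  al :: "nat \<Rightarrow> nat"
  be :: "nat \<Rightarrow> nat"
  Ac :: "nat \<times> nat \<Rightarrow> nat"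
  Bc :: "nat \<times> nat \<Rightarrow> nat"
  mm :: nat
  ac :: nat
  sl :: nat

definition qd :: "nat \<Rightarrow> nat \<Rightarrow> nat \<Rightarrow> nat" where
  "qd b a u = min (u div b) (a - 1)"

definition exE :: "nat \<Rightarrow> nat \<Rightarrow> nat \<Rightarrow> nat \<Rightarrow> nat" where
  "exE b a u w = qd b a u * (2*a) + qd b a w"

definition exX :: "nat \<Rightarrow> nat \<Rightarrow> nat \<Rightarrow> nat" where
  "exX b a x = (a - 1 - qd b a x) * (2*a)"

definition exY :: "nat \<Rightarrow> nat \<Rightarrow> nat \<Rightarrow> nat" where
  "exY b a y = a - 1 - qd b a y"

definition K0 :: "nat \<Rightarrow> nat" where
  "K0 a = (a - 1) * (2*a) + (a - 1)"

definition flushB :: "nat \<Rightarrow> vst \<Rightarrow> nat \<times> nat \<Rightarrow> nat" where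
  "flushB p s = (\<lambda>(i,j). (Bc s (i,j) + al s i * be s j) mod p)"

definition sstep :: "nat \<Rightarrow> nat \<Rightarrow> nat \<Rightarrow> tok \<Rightarrow> vst \<Rightarrow> vst" where
  "sstep p b a t s = (case t of
      Edge u w \<Rightarrow> s\<lparr>Ac := (Ac s)((u mod b, w mod b) := (Ac s (u mod b, w mod b) + rr s ^ exE b a u w) mod p)\<rparr>
    | Vert x \<Rightarrow> s\<lparr>al := (al s)(x mod b := (al s (x mod b) + rr s ^ exX b a x) mod p),
                  be := (be s)(x mod b := (be s (x mod b) + rr s ^ exY b a x) mod p)\<rparr>
    | Delim \<Rightarrow> s\<lparr>Bc := restrict (flushB p s) ({..<b} \<times> {..<b}),
                  al := restrict (\<lambda>_. 0) {..<b}, be := restrict (\<lambda>_. 0) {..<b}\<rparr>)"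

definition hstep :: "nat \<Rightarrow> nat \<Rightarrow> nat \<Rightarrow> nat \<Rightarrow> bool \<Rightarrow> vst \<Rightarrow> vst" where
  "hstep p a W L c s = s\<lparr>mm := min (Suc (mm s)) (Suc L),
     ac := (ac s + (if c \<and> mm s < L then 2^(mm s mod W) * rr s ^ (mm s div W) else 0)) mod p,
     sl := (sl s + (if c \<and> mm s < L \<and> mm s div W = K0 a then 2^(mm s mod W) else 0)) mod 2^W\<rparr>"

definition checkv :: "nat \<Rightarrow> nat \<Rightarrow> vst \<Rightarrow> nat" where
  "checkv p b s = (\<Sum>i<b. \<Sum>j<b. Ac s (i,j) * flushB p s (i,j)) mod p"

definition vout :: "nat \<Rightarrow> nat \<Rightarrow> nat \<Rightarrow> vst \<Rightarrow> nat option" where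
  "vout p b L s = (if mm s = L \<and> ac s = checkv p b s then Some (sl s mod p) else None)"

definition vinit :: "nat \<Rightarrow> nat \<Rightarrow> vst" where
  "vinit b r = \<lparr>rr = r, al = restrict (\<lambda>_. 0) {..<b}, be = restrict (\<lambda>_. 0) {..<b},
     Ac = restrict (\<lambda>_. 0) ({..<b} \<times> {..<b}), Bc = restrict (\<lambda>_. 0) ({..<b} \<times> {..<b}),
     mm = 0, ac = 0, sl = 0\<rparr>"

definition sfold :: "nat \<Rightarrow> nat \<Rightarrow> nat \<Rightarrow> tok list \<Rightarrow> vst \<Rightarrow> vst" where
  "sfold p b a ts s = foldl (\<lambda>s t. sstep p b a t s) s ts"

definition hfold :: "nat \<Rightarrow> nat \<Rightarrow> nat \<Rightarrow> nat \<Rightarrow> bool list \<Rightarrow> vst \<Rightarrow> vst" where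
  "hfold p a W L H s = foldl (\<lambda>s c. hstep p a W L c s) s H"

lemma sfold_Nil[simp]: "sfold p b a [] s = s" by (simp add: sfold_def)
lemma sfold_Cons[simp]: "sfold p b a (t # ts) s = sfold p b a ts (sstep p b a t s)" by (simp add: sfold_def)
lemma sfold_append[simp]: "sfold p b a (xs @ ys) s = sfold p b a ys (sfold p b a xs s)" by (simp add: sfold_def)

lemma efold:
  "let s' = sfold p b a (map (\<lambda>(u,w). Edge u w) es) s in
   (\<forall>i j. Ac s' (i,j) mod p = (Ac s (i,j) + (\<Sum>(u,w)\<leftarrow>es. if u mod b = i \<and> w mod b = j then rr s ^ exE b a u w else 0)) mod p)
   \<and> rr s' = rr s \<and> al s' = al s \<and> be s' = be s \<and> Bc s' = Bc s \<and> mm s' = mm s \<and> ac s' = ac s \<and> sl s' = sl s"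
proof (induction es arbitrary: s)
  case Nil
  then show ?case by (simp add: Let_def)
next
  case (Cons e es)
  obtain u w where e: "e = (u,w)" by (cases e)
  define s1 where "s1 = sstep p b a (Edge u w) s"
  have s1: "rr s1 = rr s" "al s1 = al s" "be s1 = be s" "Bc s1 = Bc s" "mm s1 = mm s" "ac s1 = ac s" "sl s1 = sl s"
    "Ac s1 (i,j) = (if u mod b = i \<and> w mod b = j then (Ac s (i,j) + rr s ^ exE b a u w) mod p else Ac s (i,j))" for i j
    unfolding s1_def sstep_def by auto
  have IH: "let s' = sfold p b a (map (\<lambda>(u,w). Edge u w) es) s1 in
   (\<forall>i j. Ac s' (i,j) mod p = (Ac s1 (i,j) + (\<Sum>(u,w)\<leftarrow>es. if u mod b = i \<and> w mod b = j then rr s ^ exE b a u w else 0)) mod p)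
   \<and> rr s' = rr s1 \<and> al s' = al s1 \<and> be s' = be s1 \<and> Bc s' = Bc s1 \<and> mm s' = mm s1 \<and> ac s' = ac s1 \<and> sl s' = sl s1"
    using Cons.IH[of s1] unfolding s1(1) .
  have eq: "sfold p b a (map (\<lambda>(u,w). Edge u w) (e # es)) s = sfold p b a (map (\<lambda>(u,w). Edge u w) es) s1"
    by (simp add: e s1_def)
  show ?case
    unfolding eq using IH s1 by (auto simp: Let_def e mod_add_left_eq add.assoc)
qed

lemma vfold:
  "let s' = sfold p b a (map Vert U) s in
   (\<forall>i. al s' i mod p = (al s i + (\<Sum>x\<leftarrow>U. if x mod b = i then rr s ^ exX b a x else 0)) mod p)
   \<and> (\<forall>i. be s' i mod p = (be s i + (\<Sum>x\<leftarrow>U. if x mod b = i then rr s ^ exY b a x else 0)) mod p)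
   \<and> rr s' = rr s \<and> Ac s' = Ac s \<and> Bc s' = Bc s \<and> mm s' = mm s \<and> ac s' = ac s \<and> sl s' = sl s"
proof (induction U arbitrary: s)
  case Nil
  then show ?case by (simp add: Let_def)
next
  case (Cons x U)
  define s1 where "s1 = sstep p b a (Vert x) s"
  have s1: "rr s1 = rr s" "Ac s1 = Ac s" "Bc s1 = Bc s" "mm s1 = mm s" "ac s1 = ac s" "sl s1 = sl s"
    "al s1 i = (if x mod b = i then (al s i + rr s ^ exX b a x) mod p else al s i)"
    "be s1 i = (if x mod b = i then (be s i + rr s ^ exY b a x) mod p else be s i)" for i
    unfolding s1_def sstep_def by auto
  have IH: "let s' = sfold p b a (map Vert U) s1 in
   (\<forall>i. al s' i mod p = (al s1 i + (\<Sum>x\<leftarrow>U. if x mod b = i then rr s ^ exX b a x else 0)) mod p)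
   \<and> (\<forall>i. be s' i mod p = (be s1 i + (\<Sum>x\<leftarrow>U. if x mod b = i then rr s ^ exY b a x else 0)) mod p)
   \<and> rr s' = rr s1 \<and> Ac s' = Ac s1 \<and> Bc s' = Bc s1 \<and> mm s' = mm s1 \<and> ac s' = ac s1 \<and> sl s' = sl s1"
    using Cons.IH[of s1] unfolding s1(1) .
  have eq: "sfold p b a (map Vert (x # U)) s = sfold p b a (map Vert U) s1"
    by (simp add: s1_def)
  show ?case
    unfolding eq using IH s1 by (auto simp: Let_def mod_add_left_eq add.assoc)
qed

definition alU :: "nat \<Rightarrow> nat \<Rightarrow> nat \<Rightarrow> nat list \<Rightarrow> nat \<Rightarrow> nat" where
  "alU b a r U i = (\<Sum>x\<leftarrow>U. if x mod b = i then r ^ exX b a x else 0)"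

definition beU :: "nat \<Rightarrow> nat \<Rightarrow> nat \<Rightarrow> nat list \<Rightarrow> nat \<Rightarrow> nat" where
  "beU b a r U i = (\<Sum>x\<leftarrow>U. if x mod b = i then r ^ exY b a x else 0)"

lemma mod_helper:
  fixes B x y x' y' p :: nat
  assumes "x mod p = x' mod p" "y mod p = y' mod p"
  shows "(B + x*y) mod p = (B + x'*y') mod p"
proof -
  have "(B + x*y) mod p = (B + (x*y) mod p) mod p" by (simp add: mod_add_right_eq)
  also have "(x*y) mod p = ((x mod p) * (y mod p)) mod p" by (simp add: mod_mult_eq)
  also have "\<dots> = ((x' mod p) * (y' mod p)) mod p" using assms by simp
  also have "\<dots> = (x'*y') mod p" by (simp add: mod_mult_eq)
  also have "(B + (x'*y') mod p) mod p = (B + x'*y') mod p" by (simp add: mod_add_right_eq)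
  finally show ?thesis .
qed

lemma setsfold:
  "(\<forall>i<b. al s i = 0 \<and> be s i = 0) \<Longrightarrow>
   let s' = sfold p b a (sets_stream Us) s in
   (\<forall>i<b. \<forall>j<b. flushB p s' (i,j) = (Bc s (i,j) + (\<Sum>U\<leftarrow>Us. alU b a (rr s) U i * beU b a (rr s) U j)) mod p)
   \<and> rr s' = rr s \<and> Ac s' = Ac s \<and> mm s' = mm s \<and> ac s' = ac s \<and> sl s' = sl s"
proof (induction Us arbitrary: s rule: sets_stream.induct)
  case 1
  then show ?case by (simp add: flushB_def)
next
  case (2 U)
  have V: "let s' = sfold p b a (map Vert U) s in
   (\<forall>i. al s' i mod p = (al s i + (\<Sum>x\<leftarrow>U. if x mod b = i then rr s ^ exX b a x else 0)) mod p)
   \<and> (\<forall>i. be s' i mod p = (be s i + (\<Sum>x\<leftarrow>U. if x mod b = i then rr s ^ exY b a x else 0)) mod p)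
   \<and> rr s' = rr s \<and> Ac s' = Ac s \<and> Bc s' = Bc s \<and> mm s' = mm s \<and> ac s' = ac s \<and> sl s' = sl s"
    by (rule vfold)
  define s' where "s' = sfold p b a (map Vert U) s"
  have a1: "al s' i mod p = alU b a (rr s) U i mod p" "be s' i mod p = beU b a (rr s) U i mod p" if "i < b" for i
    using V 2 that unfolding s'_def by (auto simp: Let_def alU_def beU_def)
  have o: "rr s' = rr s" "Ac s' = Ac s" "Bc s' = Bc s" "mm s' = mm s" "ac s' = ac s" "sl s' = sl s"
    using V unfolding s'_def by (auto simp: Let_def)
  have "flushB p s' (i,j) = (Bc s (i,j) + alU b a (rr s) U i * beU b a (rr s) U j) mod p"
    if "i < b" "j < b" for i j
    unfolding flushB_def using o a1 that by (auto intro: mod_helper)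
  moreover have "sfold p b a (sets_stream [U]) s = s'" by (simp add: s'_def)
  ultimately show ?case using o unfolding Let_def by simp
next
  case (3 U V Us)
  define s1 where "s1 = sfold p b a (map Vert U) s"
  define s2 where "s2 = sstep p b a Delim s1"
  have Vf: "let s' = sfold p b a (map Vert U) s in
   (\<forall>i. al s' i mod p = (al s i + (\<Sum>x\<leftarrow>U. if x mod b = i then rr s ^ exX b a x else 0)) mod p)
   \<and> (\<forall>i. be s' i mod p = (be s i + (\<Sum>x\<leftarrow>U. if x mod b = i then rr s ^ exY b a x else 0)) mod p)
   \<and> rr s' = rr s \<and> Ac s' = Ac s \<and> Bc s' = Bc s \<and> mm s' = mm s \<and> ac s' = ac s \<and> sl s' = sl s"
    by (rule vfold)
  have s1: "al s1 i mod p = alU b a (rr s) U i mod p" "be s1 i mod p = beU b a (rr s) U i mod p" 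
     "rr s1 = rr s" "Ac s1 = Ac s" "Bc s1 = Bc s" "mm s1 = mm s" "ac s1 = ac s" "sl s1 = sl s"
    if "i < b" for i
    using Vf 3(2) that unfolding s1_def by (auto simp: Let_def alU_def beU_def)
  have s1': "rr s1 = rr s" "Ac s1 = Ac s" "Bc s1 = Bc s" "mm s1 = mm s" "ac s1 = ac s" "sl s1 = sl s"
    using Vf unfolding s1_def by (auto simp: Let_def)
  have s2: "rr s2 = rr s" "Ac s2 = Ac s" "mm s2 = mm s" "ac s2 = ac s" "sl s2 = sl s"
    "\<forall>i<b. al s2 i = 0 \<and> be s2 i = 0"
    "\<forall>i<b. \<forall>j<b. Bc s2 (i,j) = (Bc s (i,j) + alU b a (rr s) U i * beU b a (rr s) U j) mod p"
    unfolding s2_def using s1 s1' by (auto simp: sstep_def flushB_def intro: mod_helper)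
  have IH: "let s' = sfold p b a (sets_stream (V # Us)) s2 in
   (\<forall>i<b. \<forall>j<b. flushB p s' (i,j) = (Bc s2 (i,j) + (\<Sum>U\<leftarrow>V # Us. alU b a (rr s2) U i * beU b a (rr s2) U j)) mod p)
   \<and> rr s' = rr s2 \<and> Ac s' = Ac s2 \<and> mm s' = mm s2 \<and> ac s' = ac s2 \<and> sl s' = sl s2"
    using 3(1) s2(6) by blast
  have eq: "sfold p b a (sets_stream (U # V # Us)) s = sfold p b a (sets_stream (V # Us)) s2"
    by (simp add: s1_def s2_def)
  show ?case unfolding eq using IH s2
    by (auto simp: Let_def mod_add_left_eq add.assoc)
qed

lemma hfold_Nil[simp]: "hfold p a W L [] s = s" by (simp add: hfold_def)
lemma hfold_snoc[simp]: "hfold p a W L (H @ [c]) s = hstep p a W L c (hfold p a W L H s)"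
  by (simp add: hfold_def)

lemma hfoldl:
  assumes "mm s = 0" "ac s = 0" "sl s = 0"
  shows "let s' = hfold p a W L H s in
   mm s' = min (length H) (Suc L)
   \<and> ac s' = (\<Sum>m<min (length H) L. if H!m then 2^(m mod W) * rr s ^ (m div W) else 0) mod p
   \<and> sl s' = (\<Sum>m<min (length H) L. if H!m \<and> m div W = K0 a then 2^(m mod W) else 0) mod 2^W
   \<and> rr s' = rr s \<and> Ac s' = Ac s \<and> al s' = al s \<and> be s' = be s \<and> Bc s' = Bc s"
proof (induction H rule: rev_induct)
  case Nil
  then show ?case using assms by simp
next
  case (snoc c H)
  define s1 where "s1 = hfold p a W L H s"
  have I: "mm s1 = min (length H) (Suc L)"
   "ac s1 = (\<Sum>m<min (length H) L. if H!m then 2^(m mod W) * rr s ^ (m div W) else 0) mod p"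
   "sl s1 = (\<Sum>m<min (length H) L. if H!m \<and> m div W = K0 a then 2^(m mod W) else 0) mod 2^W"
   "rr s1 = rr s" "Ac s1 = Ac s" "al s1 = al s" "be s1 = be s" "Bc s1 = Bc s"
    using snoc unfolding s1_def by (simp_all add: Let_def)
  have nth: "m < length H \<Longrightarrow> (H @ [c]) ! m = H ! m" for m by (simp add: nth_append)
  define s2 where "s2 = hstep p a W L c s1"
  have f: "mm s2 = min (Suc (mm s1)) (Suc L)"
    "ac s2 = (ac s1 + (if c \<and> mm s1 < L then 2^(mm s1 mod W) * rr s1 ^ (mm s1 div W) else 0)) mod p"
    "sl s2 = (sl s1 + (if c \<and> mm s1 < L \<and> mm s1 div W = K0 a then 2^(mm s1 mod W) else 0)) mod 2^W"
    "rr s2 = rr s1" "Ac s2 = Ac s1" "al s2 = al s1" "be s2 = be s1" "Bc s2 = Bc s1"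
    unfolding s2_def hstep_def by simp_all
  have e: "hfold p a W L (H @ [c]) s = s2" by (simp add: s1_def s2_def)
  show ?case
  proof (cases "length H < L")
    case True
    have mins: "min (length (H @ [c])) L = Suc (length H)" "min (length H) L = length H" using True by auto
    have m1: "mm s1 = length H" using I(1) True by simp
    have c1: "(\<Sum>m<length H. if (H @ [c])!m then 2^(m mod W) * rr s ^ (m div W) else 0)
      = (\<Sum>m<length H. if H!m then 2^(m mod W) * rr s ^ (m div W) else 0)"
      by (rule sum.cong) (simp_all add: nth)
    have c2: "(\<Sum>m<length H. if (H @ [c])!m \<and> m div W = K0 a then 2^(m mod W) else 0)
      = (\<Sum>m<length H. if H!m \<and> m div W = K0 a then 2^(m mod W) else 0)"
      by (rule sum.cong) (simp_all add: nth)
    have sumA: "(\<Sum>m<Suc (length H). if (H @ [c])!m then 2^(m mod W) * rr s ^ (m div W) else 0)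
      = (\<Sum>m<length H. if H!m then 2^(m mod W) * rr s ^ (m div W) else 0)
        + (if c then 2^(length H mod W) * rr s ^ (length H div W) else 0)"
      by (simp only: sum.lessThan_Suc c1) simp
    have sumS: "(\<Sum>m<Suc (length H). if (H @ [c])!m \<and> m div W = K0 a then 2^(m mod W) else 0)
      = (\<Sum>m<length H. if H!m \<and> m div W = K0 a then 2^(m mod W) else 0)
        + (if c \<and> length H div W = K0 a then 2^(length H mod W) else 0)"
      by (simp only: sum.lessThan_Suc c2) simp
    have g1: "mm s2 = min (length (H @ [c])) (Suc L)" using f(1) m1 True by simp
    have g2: "ac s2 = (\<Sum>m<min (length (H @ [c])) L. if (H @ [c])!m then 2^(m mod W) * rr s ^ (m div W) else 0) mod p"
      unfolding mins sumA f(2) m1 I(2) I(4) using True by (simp add: mod_add_left_eq)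
    have g3: "sl s2 = (\<Sum>m<min (length (H @ [c])) L. if (H @ [c])!m \<and> m div W = K0 a then 2^(m mod W) else 0) mod 2^W"
      unfolding mins sumS f(3) m1 I(3) using True by (simp add: mod_add_left_eq)
    show ?thesis unfolding e Let_def
      by (intro conjI) (simp_all only: g1 g2 g3 f(4-8) I(4-8))
  next
    case False
    have mins: "min (length (H @ [c])) L = L" "min (length H) L = L" using False by auto
    have c1: "(\<Sum>m<L. if (H @ [c])!m then 2^(m mod W) * rr s ^ (m div W) else 0)
      = (\<Sum>m<L. if H!m then 2^(m mod W) * rr s ^ (m div W) else 0)"
      by (rule sum.cong) (use False in \<open>simp_all add: nth_append\<close>)
    have c2: "(\<Sum>m<L. if (H @ [c])!m \<and> m div W = K0 a then 2^(m mod W) else 0)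
      = (\<Sum>m<L. if H!m \<and> m div W = K0 a then 2^(m mod W) else 0)"
      by (rule sum.cong) (use False in \<open>simp_all add: nth_append\<close>)
    have mmge: "\<not> mm s1 < L" using I(1) False by simp
    have g1: "mm s2 = min (length (H @ [c])) (Suc L)" using f(1) I(1) False by simp
    have g2: "ac s2 = (\<Sum>m<min (length (H @ [c])) L. if (H @ [c])!m then 2^(m mod W) * rr s ^ (m div W) else 0) mod p"
      unfolding mins c1 f(2) using mmge I(2) mins by simp
    have g3: "sl s2 = (\<Sum>m<min (length (H @ [c])) L. if (H @ [c])!m \<and> m div W = K0 a then 2^(m mod W) else 0) mod 2^W"
      unfolding mins c2 f(3) using mmge I(3) mins by simp
    show ?thesis unfolding e Let_def
      by (intro conjI) (simp_all only: g1 g2 g3 f(4-8) I(4-8))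
  qed
qed

lemma sl_cong: "(\<And>x. x \<in> set xs \<Longrightarrow> f x = g x) \<Longrightarrow> (\<Sum>x\<leftarrow>xs. f x) = (\<Sum>x\<leftarrow>xs. g x)"
  by (induct xs) auto

lemma sl_swap_set: "(\<Sum>i\<in>A. \<Sum>x\<leftarrow>xs. f i x) = (\<Sum>x\<leftarrow>xs. \<Sum>i\<in>A. (f i x :: nat))"
  by (induct xs) (simp_all add: sum.distrib)

lemma sl_mult_left: "(c::nat) * (\<Sum>x\<leftarrow>xs. f x) = (\<Sum>x\<leftarrow>xs. c * f x)"
  by (induct xs) (simp_all add: algebra_simps)

lemma sl_mult_right: "(\<Sum>x\<leftarrow>xs. f x) * (c::nat) = (\<Sum>x\<leftarrow>xs. f x * c)"
  by (induct xs) (simp_all add: algebra_simps)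

lemma sl_swap: "(\<Sum>x\<leftarrow>xs. \<Sum>y\<leftarrow>ys. f x y) = (\<Sum>y\<leftarrow>ys. \<Sum>x\<leftarrow>xs. (f x y :: nat))"
  by (induct xs) (simp_all add: sum_list_addf)

lemma sl_le: "(\<And>x. x \<in> set xs \<Longrightarrow> f x \<le> c) \<Longrightarrow> (\<Sum>x\<leftarrow>xs. f x) \<le> length xs * (c::nat)"
  by (induct xs) (auto intro: add_mono)

lemma sl_count: "(\<Sum>x\<leftarrow>xs. if P x then 1 else 0) = length (filter P xs)"
  by (induct xs) auto

lemma sl_delta: "distinct xs \<Longrightarrow> (\<Sum>x\<leftarrow>xs. if x = u then (c::nat) else 0) = (if u \<in> set xs then c else 0)"
  by (induct xs) auto

definition TT :: "nat \<Rightarrow> nat \<Rightarrow> (nat \<times> nat) list \<Rightarrow> nat list list \<Rightarrow> nat \<Rightarrow> nat" where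
  "TT b a es Us r = (\<Sum>(u,w)\<leftarrow>es. \<Sum>U\<leftarrow>Us. \<Sum>x\<leftarrow>U. \<Sum>y\<leftarrow>U.
      if x mod b = u mod b \<and> y mod b = w mod b then r ^ (exE b a u w + exX b a x + exY b a y) else 0)"

definition cnt :: "nat \<Rightarrow> nat \<Rightarrow> (nat \<times> nat) list \<Rightarrow> nat list list \<Rightarrow> nat \<Rightarrow> nat" where
  "cnt b a es Us k = (\<Sum>(u,w)\<leftarrow>es. \<Sum>U\<leftarrow>Us. \<Sum>x\<leftarrow>U. \<Sum>y\<leftarrow>U.
      if x mod b = u mod b \<and> y mod b = w mod b \<and> exE b a u w + exX b a x + exY b a y = k then 1 else 0)"

lemma if0_mult: "(if A then x else 0) * (c::nat) = (if A then x * c else 0)" by simp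

lemma double_delta:
  fixes b u' w' :: nat
  assumes "u' < b" "w' < b"
  shows "(\<Sum>i<b. \<Sum>j<b. if u' = i \<and> w' = j then G i j else (0::nat)) = G u' w'"
proof -
  have "(\<Sum>j<b. if u' = i \<and> w' = j then G i j else 0) = (if u' = i then G i w' else 0)" for i
  proof (cases "u' = i")
    case True
    have "(\<Sum>j<b. if w' = j then G i j else 0) = G i w'"
      using sum.delta'[of "{..<b}" w' "\<lambda>j. G i j"] assms by simp
    thus ?thesis using True by simp
  qed simp
  hence "(\<Sum>i<b. \<Sum>j<b. if u' = i \<and> w' = j then G i j else (0::nat)) = (\<Sum>i<b. if u' = i then G i w' else 0)"
    by simp
  also have "\<dots> = G u' w'" using sum.delta'[of "{..<b}" u' "\<lambda>i. G i w'"] assms by simp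
  finally show ?thesis .
qed

lemma prod_identity:
  assumes b: "b > 0"
  shows "(\<Sum>i<b. \<Sum>j<b. (\<Sum>(u,w)\<leftarrow>es. if u mod b = i \<and> w mod b = j then r ^ exE b a u w else 0)
            * (\<Sum>U\<leftarrow>Us. alU b a r U i * beU b a r U j)) = TT b a es Us r"
proof -
  define EB where "EB i j = (\<Sum>U\<leftarrow>Us. alU b a r U i * beU b a r U j)" for i j
  have s1: "(\<Sum>(u,w)\<leftarrow>es. if u mod b = i \<and> w mod b = j then r ^ exE b a u w else 0) * EB i j
      = (\<Sum>(u,w)\<leftarrow>es. if u mod b = i \<and> w mod b = j then r ^ exE b a u w * EB i j else 0)" for i j
    by (simp add: sl_mult_right split_def if0_mult)
  have "(\<Sum>i<b. \<Sum>j<b. (\<Sum>(u,w)\<leftarrow>es. if u mod b = i \<and> w mod b = j then r ^ exE b a u w else 0) * EB i j)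
      = (\<Sum>i<b. \<Sum>j<b. \<Sum>(u,w)\<leftarrow>es. if u mod b = i \<and> w mod b = j then r ^ exE b a u w * EB i j else 0)"
    by (simp only: s1)
  also have "\<dots> = (\<Sum>(u,w)\<leftarrow>es. \<Sum>i<b. \<Sum>j<b. if u mod b = i \<and> w mod b = j then r ^ exE b a u w * EB i j else 0)"
    by (simp only: sl_swap_set split_def)
  also have "\<dots> = (\<Sum>(u,w)\<leftarrow>es. r ^ exE b a u w * EB (u mod b) (w mod b))"
    by (rule sl_cong) (use b in \<open>auto simp: double_delta\<close>)
  also have "\<dots> = TT b a es Us r"
    unfolding TT_def
  proof (rule sl_cong, clarify)
    fix u w
    have pt: "r ^ exE b a u w * ((if x mod b = u mod b then r ^ exX b a x else 0) * (if y mod b = w mod b then r ^ exY b a y else 0))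
       = (if x mod b = u mod b \<and> y mod b = w mod b then r ^ (exE b a u w + exX b a x + exY b a y) else 0)" for x y
      by (simp add: power_add)
    have "r ^ exE b a u w * EB (u mod b) (w mod b)
       = (\<Sum>U\<leftarrow>Us. r ^ exE b a u w * (alU b a r U (u mod b) * beU b a r U (w mod b)))"
      unfolding EB_def by (simp add: sl_mult_left)
    also have "\<dots> = (\<Sum>U\<leftarrow>Us. \<Sum>x\<leftarrow>U. \<Sum>y\<leftarrow>U. r ^ exE b a u w * ((if x mod b = u mod b then r ^ exX b a x else 0) * (if y mod b = w mod b then r ^ exY b a y else 0)))"
    proof (rule sl_cong)
      fix U
      have "alU b a r U (u mod b) * beU b a r U (w mod b) = (\<Sum>x\<leftarrow>U. (if x mod b = u mod b then r ^ exX b a x else 0) * beU b a r U (w mod b))"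
        unfolding alU_def by (rule sl_mult_right)
      also have "\<dots> = (\<Sum>x\<leftarrow>U. \<Sum>y\<leftarrow>U. (if x mod b = u mod b then r ^ exX b a x else 0) * (if y mod b = w mod b then r ^ exY b a y else 0))"
        unfolding beU_def by (simp only: sl_mult_left)
      finally show "r ^ exE b a u w * (alU b a r U (u mod b) * beU b a r U (w mod b)) = (\<Sum>x\<leftarrow>U. \<Sum>y\<leftarrow>U. r ^ exE b a u w * ((if x mod b = u mod b then r ^ exX b a x else 0) * (if y mod b = w mod b then r ^ exY b a y else 0)))"
        by (simp only: sl_mult_left)
    qed
    also have "\<dots> = (\<Sum>U\<leftarrow>Us. \<Sum>x\<leftarrow>U. \<Sum>y\<leftarrow>U. if x mod b = u mod b \<and> y mod b = w mod b then r ^ (exE b a u w + exX b a x + exY b a y) else 0)"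
      by (simp only: pt)
    finally show "r ^ exE b a u w * EB (u mod b) (w mod b) = (\<Sum>U\<leftarrow>Us. \<Sum>x\<leftarrow>U. \<Sum>y\<leftarrow>U. if x mod b = u mod b \<and> y mod b = w mod b then r ^ (exE b a u w + exX b a x + exY b a y) else 0)" .
  qed
  finally show ?thesis unfolding EB_def .
qed

lemma qd_le: "a > 0 \<Longrightarrow> qd b a u \<le> a - 1"
  by (simp add: qd_def)

lemma ex_bound:
  assumes a: "a > 0"
  shows "exE b a u w + exX b a x + exY b a y < 4*a*a"
proof -
  obtain a' where a': "a = Suc a'" using a by (cases a) auto
  have q: "qd b a z \<le> a'" for z using qd_le[OF a, of b z] a' by simp
  have e1: "exE b a u w \<le> a' * (2*a) + a'"
    unfolding exE_def using q[of u] q[of w] by (intro add_mono mult_le_mono1) auto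
  have e2: "exX b a x \<le> a' * (2*a)"
    unfolding exX_def using a' by (intro mult_le_mono1) simp
  have e3: "exY b a y \<le> a'" unfolding exY_def using a' by simp
  have "a' * (2*a) + a' + a' * (2*a) + a' < 4*a*a" using a' by (simp add: algebra_simps)
  thus ?thesis using e1 e2 e3 by linarith
qed

lemma if10_mult: "(if A then 1 else 0) * (c::nat) = (if A then c else 0)" by simp

lemma sum_delta_lt: "e < N \<Longrightarrow> (\<Sum>k<N. if P \<and> e = k then (r::nat) ^ k else 0) = (if P then r ^ e else 0)"
  by (cases P) (simp_all add: sum.delta')

lemma cnt_poly:
  assumes a: "a > 0"
  shows "(\<Sum>k<4*a*a. cnt b a es Us k * r ^ k) = TT b a es Us r"
proof -
  have "(\<Sum>k<4*a*a. cnt b a es Us k * r ^ k) =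
    (\<Sum>k<4*a*a. \<Sum>(u,w)\<leftarrow>es. \<Sum>U\<leftarrow>Us. \<Sum>x\<leftarrow>U. \<Sum>y\<leftarrow>U.
      if x mod b = u mod b \<and> y mod b = w mod b \<and> exE b a u w + exX b a x + exY b a y = k then r ^ k else 0)"
    unfolding cnt_def by (simp add: sl_mult_right split_def if10_mult del: mult_if_delta)
  also have "\<dots> = (\<Sum>(u,w)\<leftarrow>es. \<Sum>U\<leftarrow>Us. \<Sum>x\<leftarrow>U. \<Sum>y\<leftarrow>U. \<Sum>k<4*a*a.
      if (x mod b = u mod b \<and> y mod b = w mod b) \<and> exE b a u w + exX b a x + exY b a y = k then r ^ k else 0)"
    by (simp only: sl_swap_set split_def conj_assoc)
  also have "\<dots> = TT b a es Us r"
    unfolding TT_def by (simp only: sum_delta_lt[OF ex_bound[OF a]])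
  finally show ?thesis .
qed

lemma qd_eq: "b > 0 \<Longrightarrow> a = n div b + 1 \<Longrightarrow> z < n \<Longrightarrow> qd b a z = z div b"
  by (simp add: qd_def div_le_mono min_def)

lemma K0_iff:
  assumes b: "b > 0" and a: "a = n div b + 1" and lt: "u < n" "w < n" "x < n" "y < n"
  shows "(x mod b = u mod b \<and> y mod b = w mod b \<and> exE b a u w + exX b a x + exY b a y = K0 a) \<longleftrightarrow> (x = u \<and> y = w)"
proof
  assume h: "x mod b = u mod b \<and> y mod b = w mod b \<and> exE b a u w + exX b a x + exY b a y = K0 a"
  have qu: "qd b a u = u div b" and qw: "qd b a w = w div b" and qx: "qd b a x = x div b" and qy: "qd b a y = y div b"
    using qd_eq[OF b a] lt by auto
  have lex: "x div b \<le> a - 1" "y div b \<le> a - 1" using qx qy qd_le[of a b x] qd_le[of a b y] a by auto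
  define I where "I = u div b + (a - 1 - x div b)"
  define J where "J = w div b + (a - 1 - y div b)"
  have J: "J < 2*a" unfolding J_def using qd_le[of a b w] qw a lex by auto
  define c where "c = a - 1"
  have a1: "c < 2*a" using a c_def by simp
  have cm: "(c * (2*a) + c) mod (2*a) = c" using a1 by (simp only: mod_mult_self3 mod_less)
  have nz: "2*a \<noteq> 0" using a by simp
  have cd: "(c * (2*a) + c) div (2*a) = c" by (simp only: div_mult_self3[OF nz] div_less[OF a1] add_0_right)
  have "exE b a u w + exX b a x + exY b a y = I * (2*a) + J"
    unfolding exE_def exX_def exY_def qu qw qx qy I_def J_def by (simp add: algebra_simps)
  hence eq: "I * (2*a) + J = c * (2*a) + c" using h by (simp add: K0_def c_def)
  have "J = (I * (2*a) + J) mod (2*a)" using J by simp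
  also have "\<dots> = (c * (2*a) + c) mod (2*a)" using eq by simp
  also have "\<dots> = c" by (rule cm)
  finally have Jv: "J = a - 1" using c_def by simp
  have "I = (I * (2*a) + J) div (2*a)" using J by simp
  also have "\<dots> = (c * (2*a) + c) div (2*a)" using eq by simp
  also have "\<dots> = c" by (rule cd)
  finally have Iv: "I = a - 1" using c_def by simp
  have "u div b = x div b" using Iv lex unfolding I_def by linarith
  hence "u = x" using h by (metis div_mult_mod_eq)
  moreover have "w div b = y div b" using Jv lex unfolding J_def by linarith
  hence "w = y" using h by (metis div_mult_mod_eq)
  ultimately show "x = u \<and> y = w" by simp
next
  assume "x = u \<and> y = w"
  moreover have a0: "a > 0" using a by simp
  moreover have "qd b a u \<le> a - 1" "qd b a w \<le> a - 1" using qd_le[OF a0] by auto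
  ultimately have h: "x = u" "y = w" "qd b a u \<le> a - 1" "qd b a w \<le> a - 1" by auto
  obtain D1 where D1: "a - 1 = qd b a u + D1" using h(3) le_iff_add by blast
  obtain D2 where D2: "a - 1 = qd b a w + D2" using h(4) le_iff_add by blast
  have "exE b a u w + exX b a x + exY b a y = qd b a u * (2*a) + qd b a w + (a - 1 - qd b a u) * (2*a) + (a - 1 - qd b a w)"
    unfolding exE_def exX_def exY_def h(1,2) by simp
  also have "\<dots> = qd b a u * (2*a) + qd b a w + D1 * (2*a) + D2"
  proof -
    have "a - 1 - qd b a u = D1" "a - 1 - qd b a w = D2" using D1 D2 by simp_all
    thus ?thesis by simp
  qed
  also have "\<dots> = (qd b a u + D1) * (2*a) + (qd b a w + D2)" by (simp add: algebra_simps)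
  also have "\<dots> = K0 a" unfolding K0_def D1[symmetric] D2[symmetric] ..
  finally show "x mod b = u mod b \<and> y mod b = w mod b \<and> exE b a u w + exX b a x + exY b a y = K0 a"
    using h by simp
qed

lemma edges_count:
  assumes v: "valid_edges n es"
  shows "(\<Sum>(u,w)\<leftarrow>es. if u \<in> S \<and> w \<in> S then 1 else 0) = card {e \<in> edge_set es. e \<subseteq> S}"
proof -
  define P where "P = (\<lambda>(u::nat,w::nat). u \<in> S \<and> w \<in> S)"
  define f where "f = (\<lambda>(u::nat,w::nat). {u,w})"
  have d: "distinct (map f es)" using v unfolding valid_edges_def f_def by simp
  hence de: "distinct es" and inj: "inj_on f (set es)" by (simp_all add: distinct_map)
  have "(\<Sum>(u,w)\<leftarrow>es. if u \<in> S \<and> w \<in> S then 1 else 0) = (\<Sum>e\<leftarrow>es. if P e then 1 else 0)"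
    unfolding P_def by (simp add: split_def)
  also have "\<dots> = length (filter P es)" by (rule sl_count)
  also have "\<dots> = card (set (filter P es))" using de by (metis distinct_card distinct_filter)
  also have "\<dots> = card (f ` set (filter P es))"
    using inj by (intro card_image[symmetric]) (auto intro: inj_on_subset)
  also have "f ` set (filter P es) = {e \<in> edge_set es. e \<subseteq> S}"
    unfolding edge_set_def f_def P_def by auto
  finally show ?thesis .
qed

lemma cnt_K0:
  assumes b: "b > 0" and a: "a = n div b + 1" and ve: "valid_edges n es" and vs: "valid_sets n Us"
  shows "cnt b a es Us (K0 a) = iec_value es Us"
proof -
  have ed: "u < n \<and> w < n" if "(u,w) \<in> set es" for u w using ve that unfolding valid_edges_def by auto
  have "cnt b a es Us (K0 a) = (\<Sum>(u,w)\<leftarrow>es. \<Sum>U\<leftarrow>Us. \<Sum>x\<leftarrow>U. \<Sum>y\<leftarrow>U. if x = u \<and> y = w then 1 else 0)"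
    unfolding cnt_def
  proof (rule sl_cong, clarify, rule sl_cong, rule sl_cong, rule sl_cong)
    fix u w U x y assume h: "(u,w) \<in> set es" "U \<in> set Us" "x \<in> set U" "y \<in> set U"
    have "x < n" "y < n" using vs h unfolding valid_sets_def by auto
    thus "(if x mod b = u mod b \<and> y mod b = w mod b \<and> exE b a u w + exX b a x + exY b a y = K0 a then 1 else 0)
        = (if x = u \<and> y = w then 1 else (0::nat))"
      using K0_iff[OF b a] ed[OF h(1)] by simp
  qed
  also have "\<dots> = (\<Sum>(u,w)\<leftarrow>es. \<Sum>U\<leftarrow>Us. if u \<in> set U \<and> w \<in> set U then 1 else 0)"
  proof (rule sl_cong, clarify, rule sl_cong)
    fix u w U assume h: "U \<in> set Us"
    have dU: "distinct U" using vs h unfolding valid_sets_def by auto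
    have "(\<Sum>x\<leftarrow>U. \<Sum>y\<leftarrow>U. if x = u \<and> y = w then 1 else (0::nat)) = (\<Sum>x\<leftarrow>U. if x = u then (if w \<in> set U then 1 else 0) else 0)"
      by (rule sl_cong) (simp add: sl_delta[OF dU] cong: if_cong)
    also have "\<dots> = (if u \<in> set U \<and> w \<in> set U then 1 else 0)" by (simp add: sl_delta[OF dU])
    finally show "(\<Sum>x\<leftarrow>U. \<Sum>y\<leftarrow>U. if x = u \<and> y = w then 1 else (0::nat)) = (if u \<in> set U \<and> w \<in> set U then 1 else 0)" .
  qed
  also have "\<dots> = (\<Sum>U\<leftarrow>Us. \<Sum>(u,w)\<leftarrow>es. if u \<in> set U \<and> w \<in> set U then 1 else 0)"
    unfolding split_def by (rule sl_swap)
  also have "\<dots> = iec_value es Us"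
    unfolding iec_value_def by (rule sl_cong) (rule edges_count[OF ve])
  finally show ?thesis .
qed

lemma len_U: "valid_sets n Us \<Longrightarrow> U \<in> set Us \<Longrightarrow> length U \<le> n"
proof -
  assume v: "valid_sets n Us" and U: "U \<in> set Us"
  have "distinct U" "set U \<subseteq> {..<n}" using v U unfolding valid_sets_def by auto
  hence "length U = card (set U)" by (simp add: distinct_card)
  moreover have "card (set U) \<le> card {..<n}" using \<open>set U \<subseteq> {..<n}\<close> by (intro card_mono) auto
  ultimately show ?thesis by simp
qed

lemma len_es: "valid_edges n es \<Longrightarrow> length es \<le> n * n"
proof -
  assume v: "valid_edges n es"
  have "distinct (map (\<lambda>(u,w). {u,w}) es)" using v unfolding valid_edges_def by simp
  hence d: "distinct es" by (simp add: distinct_map)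
  have "set es \<subseteq> {..<n} \<times> {..<n}" using v unfolding valid_edges_def by auto
  hence "card (set es) \<le> card ({..<n} \<times> {..<n})" by (intro card_mono) auto
  thus ?thesis using d by (simp add: distinct_card)
qed

lemma cnt_le:
  assumes ve: "valid_edges n es" and vs: "valid_sets n Us"
  shows "cnt b a es Us k \<le> n * n * (length Us * (n * n))"
proof -
  have "cnt b a es Us k \<le> length es * (length Us * (n * n))"
    unfolding cnt_def
  proof (rule sl_le, clarify, rule sl_le)
    fix u w U assume U: "U \<in> set Us"
    have lU: "length U \<le> n" by (rule len_U[OF vs U])
    have "(\<Sum>x\<leftarrow>U. \<Sum>y\<leftarrow>U. if x mod b = u mod b \<and> y mod b = w mod b \<and> exE b a u w + exX b a x + exY b a y = k then 1 else 0)
        \<le> length U * (length U * 1)"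
      by (intro sl_le) simp
    also have "\<dots> \<le> n * n" using lU by (simp add: mult_le_mono)
    finally show "(\<Sum>x\<leftarrow>U. \<Sum>y\<leftarrow>U. if x mod b = u mod b \<and> y mod b = w mod b \<and> exE b a u w + exX b a x + exY b a y = k then 1 else 0) \<le> n * n" .
  qed
  also have "\<dots> \<le> n * n * (length Us * (n * n))" using len_es[OF ve] by (rule mult_le_mono1)
  finally show ?thesis .
qed

lemma sum_split_add: "(\<Sum>m<A+B. f m) = (\<Sum>m<A. f m) + (\<Sum>j<B. (f (A + j) :: nat))" for A B :: nat
  by (induct B) (simp_all add: add.assoc)

lemma sum_reindex: "(\<Sum>m<N*W. f m) = (\<Sum>k<N. \<Sum>j<W. (f (k*W + j) :: nat))" for N W :: nat
proof (induct N)
  case 0 then show ?case by simp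
next
  case (Suc N)
  have "(\<Sum>m<Suc N * W. f m) = (\<Sum>m<N*W + W. f m)" by (simp add: add.commute)
  also have "\<dots> = (\<Sum>m<N*W. f m) + (\<Sum>j<W. f (N*W + j))" by (rule sum_split_add)
  finally show ?case using Suc by simp
qed

lemma bits_sum: "(\<Sum>j<W. if bit (c::nat) j then 2^j else 0) = c mod 2^W"
proof -
  have "c mod 2^W = take_bit W c" by (simp add: take_bit_eq_mod)
  also have "\<dots> = horner_sum of_bool 2 (map (bit c) [0..<W])" by (simp add: horner_sum_bit_eq_take_bit)
  also have "\<dots> = (\<Sum>j<W. of_bool (bit c j) * 2^j)" by (simp add: horner_sum_eq_sum atLeast0LessThan)
  also have "\<dots> = (\<Sum>j<W. if bit c j then 2^j else 0)" by (rule sum.cong) auto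
  finally show ?thesis by simp
qed

lemma chunk_lt: "(\<Sum>j<W. if P j then 2^j else 0) < (2::nat)^W"
proof -
  have "(\<Sum>j<W. if P j then 2^j else 0) \<le> (\<Sum>j<W. (2::nat)^j)" by (intro sum_mono) auto
  also have "\<dots> = 2^W - 1" using sum_power2[of W] by (simp add: atLeast0LessThan)
  finally have "(\<Sum>j<W. if P j then 2^j else 0) \<le> (2::nat)^W - 1" .
  moreover have "(0::nat) < 2^W" by simp
  ultimately show ?thesis by linarith
qed

lemma vert_delim_eq:
  "map Vert U @ Delim # X = map Vert U' @ Delim # Y \<Longrightarrow> U = U' \<and> X = Y"
proof (induction U arbitrary: U')
  case Nil
  then show ?case by (cases U') auto
next
  case (Cons x U)
  then show ?case by (cases U') auto
qed

lemma vert_ne_delim: "map Vert U \<noteq> map Vert U' @ Delim # Y"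
proof
  assume "map Vert U = map Vert U' @ Delim # Y"
  hence "Delim \<in> set (map Vert U)" by simp
  thus False by auto
qed

lemma sets_stream_cons2: "sets_stream (U # V # Us) = map Vert U @ Delim # sets_stream (V # Us)"
  by simp

lemma sets_stream_inj:
  "sets_stream Us = sets_stream Us' \<Longrightarrow> Us = Us' \<or> (Us = [] \<and> Us' = [[]]) \<or> (Us = [[]] \<and> Us' = [])"
proof (induction Us arbitrary: Us' rule: sets_stream.induct)
  case 1
  then show ?case
  proof (cases Us' rule: sets_stream.cases)
    case (3 U V Vs) then show ?thesis using 1 by simp
  qed auto
next
  case (2 U)
  then show ?case
  proof (cases Us' rule: sets_stream.cases)
    case 1 then show ?thesis using 2 by simp
  next
    case (2 U') then show ?thesis using "2.prems" by (simp add: inj_map_eq_map inj_def)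
  next
    case (3 U' V Vs) then show ?thesis using "2.prems" vert_ne_delim by (metis sets_stream_cons2 sets_stream.simps(2))
  qed
next
  case (3 U V Us)
  show ?case
  proof (cases Us' rule: sets_stream.cases)
    case 1 then show ?thesis using "3.prems" by simp
  next
    case (2 U') then show ?thesis using "3.prems" vert_ne_delim by (metis sets_stream_cons2 sets_stream.simps(2))
  next
    case (3 U' V' Vs)
    have "U = U' \<and> sets_stream (V # Us) = sets_stream (V' # Vs)"
      using "3.prems" 3 vert_delim_eq by (metis sets_stream_cons2)
    moreover hence "V # Us = V' # Vs"
      using "3.IH"[of "V' # Vs"] by auto
    ultimately show ?thesis using 3 by simp
  qed
qed

lemma no_edge_sets: "Edge u w \<notin> set (sets_stream Us)"
  by (induction Us rule: sets_stream.induct) auto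

lemma edges_prefix:
  "map (\<lambda>(u,w). Edge u w) es @ X = map (\<lambda>(u,w). Edge u w) es' @ Y \<Longrightarrow>
   (\<forall>u w. Edge u w \<notin> set X) \<Longrightarrow> (\<forall>u w. Edge u w \<notin> set Y) \<Longrightarrow> es = es' \<and> X = Y"
proof (induction es arbitrary: es')
  case Nil
  then show ?case by (cases es') (auto split: prod.splits)
next
  case (Cons e es)
  obtain x1 x2 where e: "e = (x1, x2)" by (cases e)
  show ?case
  proof (cases es')
    case Nil
    hence "Y = map (\<lambda>(u,w). Edge u w) (e # es) @ X" using Cons.prems(1) by simp
    hence "Edge x1 x2 \<in> set Y" by (simp add: e)
    thus ?thesis using Cons.prems(3) by blast
  next
    case (Cons e' es'')
    obtain y1 y2 where e': "e' = (y1, y2)" by (cases e')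
    have "Edge x1 x2 = Edge y1 y2 \<and> map (\<lambda>(u,w). Edge u w) es @ X = map (\<lambda>(u,w). Edge u w) es'' @ Y"
      using Cons.prems(1) \<open>es' = e' # es''\<close> e e' by simp
    hence "e = e'" "es = es'' \<and> X = Y" using e e' Cons.IH[of es''] Cons.prems(2,3) by auto
    thus ?thesis using \<open>es' = e' # es''\<close> by simp
  qed
qed

lemma iec_value_det:
  assumes "iec_stream es Us = iec_stream es' Us'"
  shows "iec_value es Us = iec_value es' Us'"
proof -
  have "es = es' \<and> sets_stream Us = sets_stream Us'"
    using assms unfolding iec_stream_def by (intro edges_prefix) (auto simp: no_edge_sets)
  moreover have "iec_value es [[]] = 0" for es
    unfolding iec_value_def edge_set_def by auto
  moreover have "iec_value es [] = 0" for es unfolding iec_value_def by simp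
  ultimately show ?thesis using sets_stream_inj by metis
qed

definition SS :: "nat \<Rightarrow> nat \<Rightarrow> nat \<Rightarrow> nat \<Rightarrow> vst set" where
  "SS p b L W = {s. rr s < p \<and> al s \<in> PiE {..<b} (\<lambda>_. {..<p}) \<and> be s \<in> PiE {..<b} (\<lambda>_. {..<p})
     \<and> Ac s \<in> PiE ({..<b} \<times> {..<b}) (\<lambda>_. {..<p}) \<and> Bc s \<in> PiE ({..<b} \<times> {..<b}) (\<lambda>_. {..<p})
     \<and> mm s \<le> Suc L \<and> ac s < p \<and> sl s < 2^W}"

lemma upd_PiE: "f \<in> PiE A B \<Longrightarrow> x \<in> A \<Longrightarrow> y \<in> B x \<Longrightarrow> f(x := y) \<in> PiE A B"
  using PiE_fun_upd[of y B x f A] by (simp add: insert_absorb)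

lemma vinit_SS: "r < p \<Longrightarrow> vinit b r \<in> SS p b L W"
  unfolding SS_def vinit_def by auto

lemma sstep_SS:
  assumes p: "p > 0" and b: "b > 0" and s: "s \<in> SS p b L W"
  shows "sstep p b a t s \<in> SS p b L W"
proof -
  have f: "rr s < p" "al s \<in> PiE {..<b} (\<lambda>_. {..<p})" "be s \<in> PiE {..<b} (\<lambda>_. {..<p})"
     "Ac s \<in> PiE ({..<b} \<times> {..<b}) (\<lambda>_. {..<p})" "Bc s \<in> PiE ({..<b} \<times> {..<b}) (\<lambda>_. {..<p})"
     "mm s \<le> Suc L" "ac s < p" "sl s < 2^W" using s unfolding SS_def by simp_all
  show ?thesis
  proof (cases t)
    case (Edge u w)
    have k: "(u mod b, w mod b) \<in> {..<b} \<times> {..<b}" using b by simp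
    have v: "(Ac s (u mod b, w mod b) + rr s ^ exE b a u w) mod p \<in> {..<p}" using p by simp
    have A: "(Ac s)((u mod b, w mod b) := (Ac s (u mod b, w mod b) + rr s ^ exE b a u w) mod p) \<in> PiE ({..<b} \<times> {..<b}) (\<lambda>_. {..<p})"
      by (rule upd_PiE[OF f(4) k v])
    have e: "sstep p b a t s = s\<lparr>Ac := (Ac s)((u mod b, w mod b) := (Ac s (u mod b, w mod b) + rr s ^ exE b a u w) mod p)\<rparr>"
      by (simp add: sstep_def Edge)
    show ?thesis unfolding e SS_def using f A by simp
  next
    case (Vert x)
    have k: "x mod b \<in> {..<b}" using b by simp
    have v1: "(al s (x mod b) + rr s ^ exX b a x) mod p \<in> {..<p}" using p by simp
    have v2: "(be s (x mod b) + rr s ^ exY b a x) mod p \<in> {..<p}" using p by simp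
    have A1: "(al s)(x mod b := (al s (x mod b) + rr s ^ exX b a x) mod p) \<in> PiE {..<b} (\<lambda>_. {..<p})"
      by (rule upd_PiE[OF f(2) k v1])
    have A2: "(be s)(x mod b := (be s (x mod b) + rr s ^ exY b a x) mod p) \<in> PiE {..<b} (\<lambda>_. {..<p})"
      by (rule upd_PiE[OF f(3) k v2])
    have e: "sstep p b a t s = s\<lparr>al := (al s)(x mod b := (al s (x mod b) + rr s ^ exX b a x) mod p),
                  be := (be s)(x mod b := (be s (x mod b) + rr s ^ exY b a x) mod p)\<rparr>"
      by (simp add: sstep_def Vert)
    show ?thesis unfolding e SS_def using f A1 A2 by simp
  next
    case Delim
    have B: "restrict (flushB p s) ({..<b} \<times> {..<b}) \<in> PiE ({..<b} \<times> {..<b}) (\<lambda>_. {..<p})"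
      unfolding restrict_PiE Pi_def using p by (auto simp: flushB_def)
    have Z: "restrict (\<lambda>_. 0::nat) {..<b} \<in> PiE {..<b} (\<lambda>_. {..<p})"
      unfolding restrict_PiE Pi_def using p by simp
    have e: "sstep p b a t s = s\<lparr>Bc := restrict (flushB p s) ({..<b} \<times> {..<b}),
                  al := restrict (\<lambda>_. 0) {..<b}, be := restrict (\<lambda>_. 0) {..<b}\<rparr>"
      by (simp add: sstep_def Delim)
    show ?thesis unfolding e SS_def using f B Z by simp
  qed
qed

lemma hstep_SS:
  assumes p: "p > 0" and s: "s \<in> SS p b L W"
  shows "hstep p a W L c s \<in> SS p b L W"
  using s p unfolding SS_def hstep_def by auto

definition mkrec :: "nat \<times> (nat \<Rightarrow> nat) \<times> (nat \<Rightarrow> nat) \<times> (nat \<times> nat \<Rightarrow> nat) \<times> (nat \<times> nat \<Rightarrow> nat) \<times> nat \<times> nat \<times> nat \<Rightarrow> vst" where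
  "mkrec = (\<lambda>(r, x, y, A, B, m, c, z). \<lparr>rr = r, al = x, be = y, Ac = A, Bc = B, mm = m, ac = c, sl = z\<rparr>)"

lemma SS_sub: "SS p b L W \<subseteq> mkrec ` ({..<p} \<times> PiE {..<b} (\<lambda>_. {..<p}) \<times> PiE {..<b} (\<lambda>_. {..<p})
     \<times> PiE ({..<b} \<times> {..<b}) (\<lambda>_. {..<p}) \<times> PiE ({..<b} \<times> {..<b}) (\<lambda>_. {..<p}) \<times> {..Suc L} \<times> {..<p} \<times> {..<(2::nat)^W})"
proof
  fix s assume s: "s \<in> SS p b L W"
  have "s = mkrec (rr s, al s, be s, Ac s, Bc s, mm s, ac s, sl s)" unfolding mkrec_def by simp
  moreover have "(rr s, al s, be s, Ac s, Bc s, mm s, ac s, sl s) \<in> {..<p} \<times> PiE {..<b} (\<lambda>_. {..<p}) \<times> PiE {..<b} (\<lambda>_. {..<p})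
     \<times> PiE ({..<b} \<times> {..<b}) (\<lambda>_. {..<p}) \<times> PiE ({..<b} \<times> {..<b}) (\<lambda>_. {..<p}) \<times> {..Suc L} \<times> {..<p} \<times> {..<(2::nat)^W}"
    using s unfolding SS_def by auto
  ultimately show "s \<in> mkrec ` ({..<p} \<times> PiE {..<b} (\<lambda>_. {..<p}) \<times> PiE {..<b} (\<lambda>_. {..<p})
     \<times> PiE ({..<b} \<times> {..<b}) (\<lambda>_. {..<p}) \<times> PiE ({..<b} \<times> {..<b}) (\<lambda>_. {..<p}) \<times> {..Suc L} \<times> {..<p} \<times> {..<(2::nat)^W})"
    by blast
qed

lemma SS_finite_card:
  assumes pW: "p \<le> 2^W" and LW: "L + 2 \<le> 2^W"
  shows "finite (SS p b L W) \<and> card (SS p b L W) \<le> 2 ^ (W * (4 + 2*b + 2*(b*b)))"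
proof -
  define P where "P = ({..<p} \<times> PiE {..<b} (\<lambda>_. {..<p}) \<times> PiE {..<b} (\<lambda>_. {..<p})
     \<times> PiE ({..<b} \<times> {..<b}) (\<lambda>_. {..<p}) \<times> PiE ({..<b} \<times> {..<b}) (\<lambda>_. {..<p}) \<times> {..Suc L} \<times> {..<p} \<times> {..<(2::nat)^W})"
  have fP: "finite P" unfolding P_def by (intro finite_cartesian_product finite_PiE) auto
  have cP: "card P = p * (p^b * (p^b * (p^(b*b) * (p^(b*b) * ((L+2) * (p * 2^W))))))"
    unfolding P_def by (simp add: card_cartesian_product card_PiE card_lessThan)
  have "card P \<le> 2^W * ((2^W)^b * ((2^W)^b * ((2^W)^(b*b) * ((2^W)^(b*b) * (2^W * (2^W * 2^W))))))"
    unfolding cP using pW LW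
    by (intro mult_le_mono power_mono) auto
  also have "\<dots> = 2 ^ (W * (4 + 2*b + 2*(b*b)))"
    by (simp add: power_add[symmetric] power_mult[symmetric] algebra_simps)
  finally have cP2: "card P \<le> 2 ^ (W * (4 + 2*b + 2*(b*b)))" .
  have sub: "SS p b L W \<subseteq> mkrec ` P" unfolding P_def by (rule SS_sub)
  have fin: "finite (SS p b L W)" using sub fP by (meson finite_imageI finite_subset)
  have "card (SS p b L W) \<le> card (mkrec ` P)" using sub fP by (intro card_mono) auto
  also have "\<dots> \<le> card P" by (rule card_image_le[OF fP])
  finally show ?thesis using fin cP2 by simp
qed

definition clampS :: "vst set \<Rightarrow> vst \<Rightarrow> vst \<Rightarrow> vst" where
  "clampS S z s = (if s \<in> S then s else z)"

definition mkV :: "(vst \<Rightarrow> bool list) \<Rightarrow> vst set \<Rightarrow> nat \<Rightarrow> nat \<Rightarrow> nat \<Rightarrow> nat \<Rightarrow> nat \<Rightarrow> verifier" where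
  "mkV enc S p b a W L = \<lparr>v_init = map_pmf (\<lambda>r. enc (vinit b r)) (pmf_of_set {..<p}),
     v_step = (\<lambda>t bs. return_pmf (enc (clampS S (vinit b 0) (sstep p b a t (inv_into S enc bs))))),
     v_hstep = (\<lambda>c bs. return_pmf (enc (clampS S (vinit b 0) (hstep p a W L c (inv_into S enc bs))))),
     v_out = (\<lambda>bs. vout p b L (inv_into S enc bs))\<rparr>"

lemma run_det: "run_pmf (\<lambda>x s. return_pmf (g x s)) xs s = return_pmf (foldl (\<lambda>s x. g x s) s xs)"
  by (induction xs arbitrary: s) (simp_all add: bind_return_pmf)

lemma fold_enc:
  assumes inj: "inj_on enc S" and cl: "\<And>x s. s \<in> S \<Longrightarrow> f x s \<in> S"
  shows "s \<in> S \<Longrightarrow> foldl (\<lambda>bs x. enc (clampS S z (f x (inv_into S enc bs)))) (enc s) xs = enc (foldl (\<lambda>s x. f x s) s xs)"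
proof (induction xs arbitrary: s)
  case Nil then show ?case by simp
next
  case (Cons x xs)
  have "clampS S z (f x (inv_into S enc (enc s))) = f x s"
    using inv_into_f_f[OF inj Cons.prems] cl[OF Cons.prems] by (simp add: clampS_def)
  then show ?case using Cons.IH[of "f x s"] cl[OF Cons.prems] by simp
qed

lemma v_result_mkV:
  assumes inj: "inj_on enc S" and p: "p > 0"
    and cl1: "\<And>t s. s \<in> S \<Longrightarrow> sstep p b a t s \<in> S"
    and cl2: "\<And>c s. s \<in> S \<Longrightarrow> hstep p a W L c s \<in> S"
    and ini: "\<And>r. r < p \<Longrightarrow> vinit b r \<in> S"
  shows "v_result (mkV enc S p b a W L) \<sigma> H =
    map_pmf (\<lambda>r. vout p b L (hfold p a W L H (sfold p b a \<sigma> (vinit b r)))) (pmf_of_set {..<p})"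
proof -
  have ne: "{..<p} \<noteq> {}" using p by auto
  have st: "run_pmf (v_step (mkV enc S p b a W L)) \<sigma> (enc s) = return_pmf (enc (sfold p b a \<sigma> s))" if "s \<in> S" for s
  proof -
    have "run_pmf (v_step (mkV enc S p b a W L)) \<sigma> (enc s)
        = return_pmf (foldl (\<lambda>bs x. enc (clampS S (vinit b 0) (sstep p b a x (inv_into S enc bs)))) (enc s) \<sigma>)"
      unfolding mkV_def by (simp add: run_det)
    also have "\<dots> = return_pmf (enc (sfold p b a \<sigma> s))"
      unfolding sfold_def using fold_enc[OF inj, of "sstep p b a", OF cl1 that] by simp
    finally show ?thesis .
  qed
  have hs: "run_pmf (v_hstep (mkV enc S p b a W L)) H (enc s) = return_pmf (enc (hfold p a W L H s))" if "s \<in> S" for s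
  proof -
    have "run_pmf (v_hstep (mkV enc S p b a W L)) H (enc s)
        = return_pmf (foldl (\<lambda>bs x. enc (clampS S (vinit b 0) (hstep p a W L x (inv_into S enc bs)))) (enc s) H)"
      unfolding mkV_def by (simp add: run_det)
    also have "\<dots> = return_pmf (enc (hfold p a W L H s))"
      unfolding hfold_def using fold_enc[OF inj, of "hstep p a W L", OF cl2 that] by simp
    finally show ?thesis .
  qed
  have sfS: "sfold p b a \<sigma> s \<in> S" if "s \<in> S" for s
    unfolding sfold_def using that by (induction \<sigma> arbitrary: s) (auto intro: cl1)
  have hfS: "hfold p a W L H s \<in> S" if "s \<in> S" for s
    unfolding hfold_def using that by (induction H arbitrary: s) (auto intro: cl2)
  have "v_result (mkV enc S p b a W L) \<sigma> H = map_pmf (v_out (mkV enc S p b a W L))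
     (bind_pmf (pmf_of_set {..<p}) (\<lambda>r. bind_pmf (run_pmf (v_step (mkV enc S p b a W L)) \<sigma> (enc (vinit b r))) (run_pmf (v_hstep (mkV enc S p b a W L)) H)))"
    unfolding v_result_def by (simp add: mkV_def bind_map_pmf)
  also have "\<dots> = map_pmf (v_out (mkV enc S p b a W L))
     (bind_pmf (pmf_of_set {..<p}) (\<lambda>r. return_pmf (enc (hfold p a W L H (sfold p b a \<sigma> (vinit b r))))))"
  proof (intro arg_cong[where f="map_pmf _"] bind_pmf_cong refl)
    fix r assume "r \<in> set_pmf (pmf_of_set {..<p})"
    hence r: "r < p" using ne by simp
    show "bind_pmf (run_pmf (v_step (mkV enc S p b a W L)) \<sigma> (enc (vinit b r))) (run_pmf (v_hstep (mkV enc S p b a W L)) H)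
        = return_pmf (enc (hfold p a W L H (sfold p b a \<sigma> (vinit b r))))"
      using st[OF ini[OF r]] hs[OF sfS[OF ini[OF r]]] by (simp add: bind_return_pmf)
  qed
  also have "\<dots> = map_pmf (\<lambda>r. v_out (mkV enc S p b a W L) (enc (hfold p a W L H (sfold p b a \<sigma> (vinit b r))))) (pmf_of_set {..<p})"
    by (simp add: map_bind_pmf map_pmf_def[symmetric] map_pmf_comp)
  also have "\<dots> = map_pmf (\<lambda>r. vout p b L (hfold p a W L H (sfold p b a \<sigma> (vinit b r)))) (pmf_of_set {..<p})"
  proof (rule map_pmf_cong[OF refl])
    fix r assume "r \<in> set_pmf (pmf_of_set {..<p})"
    hence r: "r < p" using ne by simp
    show "v_out (mkV enc S p b a W L) (enc (hfold p a W L H (sfold p b a \<sigma> (vinit b r)))) = vout p b L (hfold p a W L H (sfold p b a \<sigma> (vinit b r)))"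
      unfolding mkV_def using inv_into_f_f[OF inj hfS[OF sfS[OF ini[OF r]]]] by simp
  qed
  finally show ?thesis .
qed

lemma space_mkV:
  assumes encS: "enc ` S \<subseteq> {xs. length xs = K}" and z: "vinit b 0 \<in> S" and ini: "\<And>r. r < p \<Longrightarrow> vinit b r \<in> S"
    and p: "p > 0"
  shows "space_bounded (mkV enc S p b a W L) (real K)"
proof -
  have cS: "clampS S (vinit b 0) s \<in> S" for s using z by (simp add: clampS_def)
  have len: "length (enc s) = K" if "s \<in> S" for s using encS that by auto
  have sp: "set_pmf (pmf_of_set {..<p}) = {..<p}" using p by (intro set_pmf_of_set) auto
  have i: "\<forall>x\<in>set_pmf (v_init (mkV enc S p b a W L)). real (length x) \<le> real K"
    unfolding mkV_def using len[OF ini] sp by auto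
  have st: "\<forall>t st. \<forall>x\<in>set_pmf (v_step (mkV enc S p b a W L) t st). real (length x) \<le> real K"
    unfolding mkV_def using len[OF cS] by simp
  have hs: "\<forall>c st. \<forall>x\<in>set_pmf (v_hstep (mkV enc S p b a W L) c st). real (length x) \<le> real K"
    unfolding mkV_def using len[OF cS] by simp
  show ?thesis unfolding space_bounded_def using i st hs by blast
qed

lemma two_y: "(y::nat) \<ge> 1 \<Longrightarrow> 2*y \<le> 2^y"
proof (induction y rule: dec_induct)
  case base then show ?case by simp
next
  case (step y) then show ?case by simp
qed

lemma params:
  fixes n :: nat and h v :: real
  assumes n: "n \<ge> 2" and h: "h \<ge> 1" and v: "v \<ge> 1" and hv: "h * v = (real n)^2"
  defines "b \<equiv> nat \<lfloor>sqrt v\<rfloor>"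
  defines "a \<equiv> n div b + 1"
  defines "t \<equiv> nat \<lceil>log 2 (real n)\<rceil> + 1"
  shows "b > 0" "real (b*b) \<le> v" "real (4*a*a) \<le> 40*h" "4*a*a \<le> 16*(n*n)"
        "2*n \<le> 2^t" "t \<ge> 2" "real t \<le> 3 * log 2 (real n)"
proof -
  have sv: "sqrt v \<ge> 1" using v by simp
  have fl: "real_of_int \<lfloor>sqrt v\<rfloor> \<le> sqrt v" "sqrt v < real_of_int \<lfloor>sqrt v\<rfloor> + 1" by linarith+
  have fl1: "\<lfloor>sqrt v\<rfloor> \<ge> 1" using sv by linarith
  have bR: "real b = real_of_int \<lfloor>sqrt v\<rfloor>" unfolding b_def using fl1 by simp
  show b0: "b > 0" unfolding b_def using fl1 by simp
  have "real b * real b \<le> sqrt v * sqrt v" using fl bR b0 v by (intro mult_mono) auto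
  also have "\<dots> = v" using v by simp
  finally show "real (b*b) \<le> v" by simp
  have b1: "real b \<ge> 1" using b0 by simp
  have bsq: "sqrt v \<le> 2 * real b" using fl bR b1 by linarith
  have bb: "v \<le> 4 * (real b * real b)"
  proof -
    have "v = sqrt v * sqrt v" using v by simp
    also have "\<dots> \<le> (2 * real b) * (2 * real b)" using bsq sv by (intro mult_mono) auto
    finally show ?thesis by simp
  qed
  have aR: "real a \<le> real n / real b + 1"
  proof -
    have "real (n div b) \<le> real n / real b" by (rule of_nat_div_le_of_nat)
    thus ?thesis unfolding a_def by simp
  qed
  have nb: "(real n / real b)^2 \<le> 4 * h"
  proof -
    have "(real n / real b)^2 = (real n)^2 / (real b * real b)" by (simp add: power2_eq_square)
    also have "\<dots> = h * v / (real b * real b)" using hv by simp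
    also have "\<dots> \<le> h * (4 * (real b * real b)) / (real b * real b)"
      using bb h by (intro divide_right_mono mult_left_mono) auto
    also have "\<dots> = 4 * h" using b1 by simp
    finally show ?thesis .
  qed
  have "real a * real a \<le> (real n / real b + 1) * (real n / real b + 1)"
    using aR by (intro mult_mono) auto
  also have "\<dots> \<le> 2 * (real n / real b)^2 + 2"
  proof -
    define x where "x = real n / real b"
    have "0 \<le> (x - 1)^2" by simp
    moreover have "(x + 1) * (x + 1) = 2 * x^2 + 2 - (x - 1)^2" by (simp add: power2_eq_square algebra_simps)
    ultimately show ?thesis unfolding x_def[symmetric] by linarith
  qed
  also have "\<dots> \<le> 2 * (4*h) + 2" using nb by simp
  finally have "real a * real a \<le> 8*h + 2" by simp
  thus "real (4*a*a) \<le> 40*h" using h by simp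
  have "a \<le> n + 1" unfolding a_def by simp
  also have "\<dots> \<le> 2*n" using n by simp
  finally have "a \<le> 2*n" .
  hence "a*a \<le> (2*n)*(2*n)" by (intro mult_le_mono)
  thus "4*a*a \<le> 16*(n*n)" by simp
  have ln: "log 2 (real n) \<ge> 1" using n by simp
  have c1: "\<lceil>log 2 (real n)\<rceil> \<ge> 1" using ln by linarith
  have c1n: "nat \<lceil>log 2 (real n)\<rceil> \<ge> 1" using c1 by (subst le_nat_iff) auto
  show "t \<ge> 2" unfolding t_def using c1n by simp
  have "real n = 2 powr (log 2 (real n))" using n by simp
  also have "\<dots> \<le> 2 powr (real_of_int \<lceil>log 2 (real n)\<rceil>)" by (intro powr_mono) auto
  also have "\<dots> = 2 powr (real (nat \<lceil>log 2 (real n)\<rceil>))" using c1 by simp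
  also have "\<dots> = 2 ^ (nat \<lceil>log 2 (real n)\<rceil>)" by (simp add: powr_realpow)
  finally have "real n \<le> 2 ^ (nat \<lceil>log 2 (real n)\<rceil>)" .
  hence "n \<le> 2 ^ (nat \<lceil>log 2 (real n)\<rceil>)" by (metis of_nat_le_iff of_nat_numeral of_nat_power)
  thus "2*n \<le> 2^t" unfolding t_def by simp
  have "real t = real_of_int \<lceil>log 2 (real n)\<rceil> + 1" unfolding t_def using c1 by simp
  also have "\<dots> \<le> log 2 (real n) + 2" by linarith
  also have "\<dots> \<le> 3 * log 2 (real n)" using ln by simp
  finally show "real t \<le> 3 * log 2 (real n)" .
qed

lemma pow_bounds:
  fixes n t d NC :: nat
  assumes n: "n \<ge> 2" and t: "t \<ge> 2" and nt: "2*n \<le> 2^t" and NC: "NC \<le> 16*(n*n)"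
  shows "2 * n^(2*d+16) < 2^((2*d+20)*t)"
    and "NC * ((2*d+20)*t) + 2 \<le> 2^((2*d+20)*t)"
    and "n^(d+4) < 2^((2*d+20)*t)"
proof -
  have nlt: "n < 2^t" using nt n by linarith
  have "2 * n^(2*d+16) < 2 * (2^t)^(2*d+16)" using nlt by (simp add: power_strict_mono)
  also have "\<dots> = 2^(t*(2*d+16)+1)" by (simp add: power_mult[symmetric] algebra_simps)
  also have "\<dots> \<le> 2^((2*d+20)*t)" using t by (intro power_increasing) (auto simp: algebra_simps)
  finally show "2 * n^(2*d+16) < 2^((2*d+20)*t)" .
  have "n^(d+4) < (2^t)^(d+4)" using nlt by (simp add: power_strict_mono)
  also have "\<dots> = 2^(t*(d+4))" by (simp add: power_mult[symmetric])
  also have "\<dots> \<le> 2^((2*d+20)*t)" by (intro power_increasing) (auto simp: algebra_simps)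
  finally show "n^(d+4) < 2^((2*d+20)*t)" .
  define y where "y = (2*d+15)*t"
  have y1: "y \<ge> 1" unfolding y_def using t by simp
  have W: "(2*d+20)*t \<le> 2^y"
  proof -
    have "(2*d+20)*t \<le> 2*y" unfolding y_def by (simp add: algebra_simps)
    also have "\<dots> \<le> 2^y" by (rule two_y[OF y1])
    finally show ?thesis .
  qed
  have N: "NC \<le> 2^(2*t+2)"
  proof -
    have "NC \<le> 4 * ((2*n)*(2*n))" using NC by simp
    also have "\<dots> \<le> 4 * (2^t * 2^t)" using nt by (intro mult_le_mono) auto
    also have "\<dots> = 2^(2*t+2)" by (simp add: power_add[symmetric] algebra_simps)
    finally show ?thesis .
  qed
  have "NC * ((2*d+20)*t) \<le> 2^(2*t+2) * 2^y" using N W by (rule mult_le_mono)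
  also have "\<dots> = 2^(2*t+2+y)" by (simp add: power_add)
  finally have a1: "NC * ((2*d+20)*t) \<le> 2^(2*t+2+y)" .
  have "(2::nat) \<le> 2^(2*t+2+y)" by (simp add: self_le_power)
  hence "NC * ((2*d+20)*t) + 2 \<le> 2 * 2^(2*t+2+y)" using a1 by linarith
  also have "\<dots> = 2^(Suc (2*t+2+y))" by (simp only: power_Suc)
  also have "\<dots> \<le> 2^((2*d+20)*t)" unfolding y_def using t by (intro power_increasing) (auto simp: algebra_simps)
  finally show "NC * ((2*d+20)*t) + 2 \<le> 2^((2*d+20)*t)" .
qed

lemma mod_sum2:
  fixes X Y :: "nat \<Rightarrow> nat \<Rightarrow> nat" and p b :: nat
  assumes "\<And>i j. i < b \<Longrightarrow> j < b \<Longrightarrow> X i j mod p = Y i j mod p"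
  shows "(\<Sum>i<b. \<Sum>j<b. X i j) mod p = (\<Sum>i<b. \<Sum>j<b. Y i j) mod p"
proof -
  have inner: "(\<Sum>j<b. X i j) mod p = (\<Sum>j<b. Y i j) mod p" if i: "i < b" for i
  proof -
    have "(\<Sum>j<b. X i j) mod p = (\<Sum>j<b. X i j mod p) mod p" by (simp add: mod_sum_eq)
    also have "(\<Sum>j<b. X i j mod p) = (\<Sum>j<b. Y i j mod p)" using assms i by (intro sum.cong) auto
    also have "(\<Sum>j<b. Y i j mod p) mod p = (\<Sum>j<b. Y i j) mod p" by (simp add: mod_sum_eq)
    finally show ?thesis .
  qed
  have "(\<Sum>i<b. \<Sum>j<b. X i j) mod p = (\<Sum>i<b. (\<Sum>j<b. X i j) mod p) mod p" by (simp add: mod_sum_eq)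
  also have "(\<Sum>i<b. (\<Sum>j<b. X i j) mod p) = (\<Sum>i<b. (\<Sum>j<b. Y i j) mod p)" using inner by (intro sum.cong) auto
  also have "(\<Sum>i<b. (\<Sum>j<b. Y i j) mod p) mod p = (\<Sum>i<b. \<Sum>j<b. Y i j) mod p" by (simp add: mod_sum_eq)
  finally show ?thesis .
qed

lemma vinit_sel[simp]: "rr (vinit b r) = r" "al (vinit b r) = restrict (\<lambda>_. 0) {..<b}"
  "be (vinit b r) = restrict (\<lambda>_. 0) {..<b}" "Ac (vinit b r) = restrict (\<lambda>_. 0) ({..<b} \<times> {..<b})"
  "Bc (vinit b r) = restrict (\<lambda>_. 0) ({..<b} \<times> {..<b})" "mm (vinit b r) = 0" "ac (vinit b r) = 0" "sl (vinit b r) = 0"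
  by (simp_all add: vinit_def)

lemma stream_state:
  assumes b: "b > 0"
  shows "checkv p b (sfold p b a (iec_stream es Us) (vinit b r)) = TT b a es Us r mod p
    \<and> mm (sfold p b a (iec_stream es Us) (vinit b r)) = 0
    \<and> ac (sfold p b a (iec_stream es Us) (vinit b r)) = 0
    \<and> sl (sfold p b a (iec_stream es Us) (vinit b r)) = 0"
proof -
  define s1 where "s1 = sfold p b a (map (\<lambda>(u,w). Edge u w) es) (vinit b r)"
  define s' where "s' = sfold p b a (sets_stream Us) s1"
  have ss: "sfold p b a (iec_stream es Us) (vinit b r) = s'"
    unfolding s'_def s1_def iec_stream_def by simp
  define EA where "EA i j = (\<Sum>(u,w)\<leftarrow>es. if u mod b = i \<and> w mod b = j then r ^ exE b a u w else 0)" for i j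
  define EB where "EB i j = (\<Sum>U\<leftarrow>Us. alU b a r U i * beU b a r U j)" for i j
  note ef = efold[of p b a es "vinit b r", unfolded vinit_sel Let_def]
  have s1: "Ac s1 (i,j) mod p = EA i j mod p" if "i < b" "j < b" for i j
    using ef that unfolding s1_def EA_def by simp
  have s1b: "rr s1 = r" "\<forall>i<b. al s1 i = 0 \<and> be s1 i = 0" "Bc s1 (i,j) = 0" "mm s1 = 0" "ac s1 = 0" "sl s1 = 0"
    if "i < b" "j < b" for i j
    using ef that unfolding s1_def by simp_all
  have al0: "\<forall>i<b. al s1 i = 0 \<and> be s1 i = 0" using s1b(2)[of 0 0] b by simp
  have sf: "let s' = sfold p b a (sets_stream Us) s1 in
   (\<forall>i<b. \<forall>j<b. flushB p s' (i,j) = (Bc s1 (i,j) + (\<Sum>U\<leftarrow>Us. alU b a (rr s1) U i * beU b a (rr s1) U j)) mod p)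
   \<and> rr s' = rr s1 \<and> Ac s' = Ac s1 \<and> mm s' = mm s1 \<and> ac s' = ac s1 \<and> sl s' = sl s1"
    by (rule setsfold[OF al0])
  have r1: "rr s1 = r" using s1b(1)[of 0 0] b by simp
  have fb: "flushB p s' (i,j) = EB i j mod p" if "i < b" "j < b" for i j
    using sf that s1b(3)[OF that] r1 unfolding s'_def[symmetric] Let_def EB_def by simp
  have o: "Ac s' = Ac s1" "mm s' = 0" "ac s' = 0" "sl s' = 0"
    using sf s1b(4-6)[of 0 0] b unfolding s'_def[symmetric] Let_def by simp_all
  have "checkv p b s' = (\<Sum>i<b. \<Sum>j<b. Ac s' (i,j) * flushB p s' (i,j)) mod p" by (simp add: checkv_def)
  also have "\<dots> = (\<Sum>i<b. \<Sum>j<b. EA i j * EB i j) mod p"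
  proof (rule mod_sum2)
    fix i j assume ij: "i < b" "j < b"
    have "(Ac s' (i,j) * flushB p s' (i,j)) mod p = ((Ac s' (i,j) mod p) * (flushB p s' (i,j) mod p)) mod p"
      by (simp add: mod_mult_eq)
    also have "\<dots> = ((EA i j mod p) * (EB i j mod p)) mod p" using s1[OF ij] fb[OF ij] o(1) by simp
    also have "\<dots> = (EA i j * EB i j) mod p" by (simp add: mod_mult_eq)
    finally show "(Ac s' (i,j) * flushB p s' (i,j)) mod p = (EA i j * EB i j) mod p" .
  qed
  also have "(\<Sum>i<b. \<Sum>j<b. EA i j * EB i j) = TT b a es Us r"
    unfolding EA_def EB_def by (rule prod_identity[OF b])
  finally show ?thesis unfolding ss using o by simp
qed

definition ch :: "nat \<Rightarrow> bool list \<Rightarrow> nat \<Rightarrow> nat" where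
  "ch W H k = (\<Sum>j<W. if H ! (k*W + j) then 2^j else 0)"

lemma help_state:
  assumes W: "W > 0" and K: "K0 a < NC" and len: "length H = NC * W"
    and s0: "mm s = 0" "ac s = 0" "sl s = 0"
  shows "mm (hfold p a W (NC*W) H s) = NC*W
    \<and> ac (hfold p a W (NC*W) H s) = (\<Sum>k<NC. ch W H k * rr s ^ k) mod p
    \<and> sl (hfold p a W (NC*W) H s) = ch W H (K0 a)
    \<and> Ac (hfold p a W (NC*W) H s) = Ac s \<and> Bc (hfold p a W (NC*W) H s) = Bc s
    \<and> al (hfold p a W (NC*W) H s) = al s \<and> be (hfold p a W (NC*W) H s) = be s"
proof -
  have hf: "let s' = hfold p a W (NC*W) H s in
   mm s' = min (length H) (Suc (NC*W))
   \<and> ac s' = (\<Sum>m<min (length H) (NC*W). if H!m then 2^(m mod W) * rr s ^ (m div W) else 0) mod p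
   \<and> sl s' = (\<Sum>m<min (length H) (NC*W). if H!m \<and> m div W = K0 a then 2^(m mod W) else 0) mod 2^W
   \<and> rr s' = rr s \<and> Ac s' = Ac s \<and> al s' = al s \<and> be s' = be s \<and> Bc s' = Bc s"
    by (rule hfoldl[OF s0])
  have dm: "(k*W + j) div W = k" "(k*W + j) mod W = j" if "j < W" for k j using W that by auto
  have A: "(\<Sum>m<NC*W. if H!m then 2^(m mod W) * rr s ^ (m div W) else 0) = (\<Sum>k<NC. ch W H k * rr s ^ k)"
  proof -
    have "(\<Sum>m<NC*W. if H!m then (2::nat)^(m mod W) * rr s ^ (m div W) else 0)
        = (\<Sum>k<NC. \<Sum>j<W. if H!(k*W+j) then 2^((k*W+j) mod W) * rr s ^ ((k*W+j) div W) else 0)"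
      by (rule sum_reindex)
    also have "\<dots> = (\<Sum>k<NC. \<Sum>j<W. (if H!(k*W+j) then 2^j else 0) * rr s ^ k)"
      by (intro sum.cong refl) (simp add: dm)
    also have "\<dots> = (\<Sum>k<NC. ch W H k * rr s ^ k)"
      unfolding ch_def by (simp add: sum_distrib_right)
    finally show ?thesis .
  qed
  have S: "(\<Sum>m<NC*W. if H!m \<and> m div W = K0 a then 2^(m mod W) else 0) = ch W H (K0 a)"
  proof -
    have "(\<Sum>m<NC*W. if H!m \<and> m div W = K0 a then (2::nat)^(m mod W) else 0)
        = (\<Sum>k<NC. \<Sum>j<W. if H!(k*W+j) \<and> (k*W+j) div W = K0 a then 2^((k*W+j) mod W) else 0)"
      by (rule sum_reindex)
    also have "\<dots> = (\<Sum>k<NC. if k = K0 a then ch W H k else 0)"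
      unfolding ch_def by (intro sum.cong refl) (auto simp: dm intro!: sum.cong)
    also have "\<dots> = ch W H (K0 a)" using K by simp
    finally show ?thesis .
  qed
  have lt: "ch W H (K0 a) < 2^W" unfolding ch_def by (rule chunk_lt)
  show ?thesis using hf A S lt len by (simp add: Let_def)
qed

definition hon :: "nat \<Rightarrow> nat \<Rightarrow> (nat \<Rightarrow> nat) \<Rightarrow> bool list" where
  "hon W NC c = map (\<lambda>m. bit (c (m div W)) (m mod W)) [0..<NC*W]"

lemma ch_hon:
  assumes W: "W > 0" and k: "k < NC" and c: "c k < 2^W"
  shows "ch W (hon W NC c) k = c k"
proof -
  have "ch W (hon W NC c) k = (\<Sum>j<W. if bit (c k) j then 2^j else 0)"
    unfolding ch_def hon_def
  proof (intro sum.cong refl)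
    fix j assume j: "j \<in> {..<W}"
    have lt: "k*W + j < NC*W"
    proof -
      have "k*W + j < k*W + W" using j by simp
      also have "\<dots> = Suc k * W" by simp
      also have "\<dots> \<le> NC * W" using k by (intro mult_le_mono1) simp
      finally show ?thesis .
    qed
    have "(k*W + j) div W = k" "(k*W + j) mod W = j" using W j by auto
    thus "(if map (\<lambda>m. bit (c (m div W)) (m mod W)) [0..<NC*W] ! (k*W + j) then 2^j else 0)
        = (if bit (c k) j then 2^j else (0::nat))" using lt by simp
  qed
  also have "\<dots> = c k mod 2^W" by (rule bits_sum)
  also have "\<dots> = c k" using c by simp
  finally show ?thesis .
qed

lemma K0_lt: "a > 0 \<Longrightarrow> K0 a < 4*a*a"
proof -
  assume a: "a > 0"
  obtain a' where a': "a = Suc a'" using a by (cases a) auto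
  show ?thesis unfolding K0_def a' by (simp add: algebra_simps)
qed

lemma rr_sfold: "rr (sfold p b a \<sigma> s) = rr s"
proof (induction \<sigma> arbitrary: s)
  case Nil then show ?case by simp
next
  case (Cons t \<sigma>)
  have "rr (sstep p b a t s) = rr s" by (cases t) (simp_all add: sstep_def)
  then show ?case using Cons by simp
qed

lemma checkv_cong: "Ac s = Ac s' \<Longrightarrow> Bc s = Bc s' \<Longrightarrow> al s = al s' \<Longrightarrow> be s = be s' \<Longrightarrow> checkv p b s = checkv p b s'"
  unfolding checkv_def flushB_def by simp

lemma completeness_core:
  assumes b: "b > 0" and a: "a = n div b + 1" and W: "W > 0"
    and ve: "valid_edges n es" and vs: "valid_sets n Us"
    and cb: "\<And>k. cnt b a es Us k < 2^W" and fp: "iec_value es Us < p"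
  shows "vout p b (4*a*a*W) (hfold p a W (4*a*a*W) (hon W (4*a*a) (cnt b a es Us)) (sfold p b a (iec_stream es Us) (vinit b r)))
     = Some (iec_value es Us)"
proof -
  define NC where "NC = 4*a*a"
  define s' where "s' = sfold p b a (iec_stream es Us) (vinit b r)"
  define H where "H = hon W NC (cnt b a es Us)"
  define s'' where "s'' = hfold p a W (NC*W) H s'"
  have a0: "a > 0" using a by simp
  have K: "K0 a < NC" unfolding NC_def using K0_lt[OF a0] .
  have st: "checkv p b s' = TT b a es Us r mod p" "mm s' = 0" "ac s' = 0" "sl s' = 0"
    using stream_state[OF b, of p a es Us r] unfolding s'_def by simp_all
  have rr': "rr s' = r" unfolding s'_def by (simp add: rr_sfold)
  have len: "length H = NC * W" unfolding H_def hon_def by simp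
  have hs: "mm s'' = NC*W" "ac s'' = (\<Sum>k<NC. ch W H k * rr s' ^ k) mod p" "sl s'' = ch W H (K0 a)"
     "Ac s'' = Ac s'" "Bc s'' = Bc s'" "al s'' = al s'" "be s'' = be s'"
    using help_state[OF W K len st(2-4), of p] unfolding s''_def by simp_all
  have chk: "ch W H k = cnt b a es Us k" if "k < NC" for k
    unfolding H_def by (rule ch_hon[OF W that cb])
  have "ac s'' = (\<Sum>k<NC. cnt b a es Us k * r ^ k) mod p" using hs(2) chk rr' by simp
  also have "(\<Sum>k<NC. cnt b a es Us k * r ^ k) = TT b a es Us r" unfolding NC_def by (rule cnt_poly[OF a0])
  also have "TT b a es Us r mod p = checkv p b s''"
    using st(1) checkv_cong[OF hs(4-7)] by simp
  finally have acc: "ac s'' = checkv p b s''" .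
  have slv: "sl s'' = iec_value es Us" using hs(3) chk[OF K] cnt_K0[OF b a ve vs] by simp
  have "vout p b (NC*W) s'' = Some (iec_value es Us)"
    unfolding vout_def using hs(1) acc slv fp by simp
  thus ?thesis unfolding s''_def s'_def H_def NC_def .
qed

lemma nat_mod_eq_int_dvd: "(x::nat) mod p = y mod p \<Longrightarrow> int p dvd int x - int y"
proof -
  assume "x mod p = y mod p"
  hence "int x mod int p = int y mod int p" by (metis of_nat_mod)
  thus ?thesis by (simp add: mod_eq_dvd_iff)
qed

lemma soundness_core:
  assumes p: "prime p" and b: "b > 0" and a: "a = n div b + 1" and W: "W > 0"
    and ve: "valid_edges n es" and vs: "valid_sets n Us" and fp: "iec_value es Us < p"
  shows "card {r\<in>{..<p}. vout p b (4*a*a*W) (hfold p a W (4*a*a*W) H (sfold p b a (iec_stream es Us) (vinit b r)))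
      \<notin> {Some (iec_value es Us), None}} \<le> 4*a*a - 1"
proof -
  define NC where "NC = 4*a*a"
  define f where "f = iec_value es Us"
  define F where "F r = vout p b (NC*W) (hfold p a W (NC*W) H (sfold p b a (iec_stream es Us) (vinit b r)))" for r
  define B where "B = {r\<in>{..<p}. F r \<notin> {Some f, None}}"
  have a0: "a > 0" using a by simp
  have K: "K0 a < NC" unfolding NC_def using K0_lt[OF a0] .
  have st: "checkv p b (sfold p b a (iec_stream es Us) (vinit b r)) = TT b a es Us r mod p"
     "mm (sfold p b a (iec_stream es Us) (vinit b r)) = 0" "ac (sfold p b a (iec_stream es Us) (vinit b r)) = 0"
     "sl (sfold p b a (iec_stream es Us) (vinit b r)) = 0" for r
    using stream_state[OF b, of p a es Us r] by simp_all
  have "card B \<le> NC - 1"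
  proof (cases "length H = NC * W")
    case False
    have "F r = None" for r
    proof -
      have "mm (hfold p a W (NC*W) H (sfold p b a (iec_stream es Us) (vinit b r))) = min (length H) (Suc (NC*W))"
        using hfoldl[OF st(2-4), of p a W "NC*W" H] by (simp add: Let_def)
      hence "mm (hfold p a W (NC*W) H (sfold p b a (iec_stream es Us) (vinit b r))) \<noteq> NC*W" using False by simp
      thus ?thesis unfolding F_def vout_def by simp
    qed
    hence "B = {}" unfolding B_def by simp
    thus ?thesis by simp
  next
    case True
    define c where "c k = int (ch W H k) - int (cnt b a es Us k)" for k
    have hs: "mm (hfold p a W (NC*W) H (sfold p b a (iec_stream es Us) (vinit b r))) = NC*W
       \<and> ac (hfold p a W (NC*W) H (sfold p b a (iec_stream es Us) (vinit b r))) = (\<Sum>k<NC. ch W H k * r ^ k) mod p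
       \<and> sl (hfold p a W (NC*W) H (sfold p b a (iec_stream es Us) (vinit b r))) = ch W H (K0 a)
       \<and> checkv p b (hfold p a W (NC*W) H (sfold p b a (iec_stream es Us) (vinit b r))) = TT b a es Us r mod p" for r
    proof -
      note h = help_state[OF W K True st(2-4), of p r]
      have "checkv p b (hfold p a W (NC*W) H (sfold p b a (iec_stream es Us) (vinit b r))) = checkv p b (sfold p b a (iec_stream es Us) (vinit b r))"
        using h by (intro checkv_cong) auto
      thus ?thesis using h st(1) by (simp add: rr_sfold)
    qed
    show ?thesis
    proof (cases "ch W H (K0 a) mod p = f")
      case True
      have "F r \<in> {Some f, None}" for r unfolding F_def vout_def using hs[of r] True by auto
      hence "B = {}" unfolding B_def by auto
      thus ?thesis by simp
    next
      case False
      have nd: "\<not> int p dvd c (K0 a)"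
      proof
        assume "int p dvd c (K0 a)"
        hence "int (ch W H (K0 a)) mod int p = int (cnt b a es Us (K0 a)) mod int p"
          unfolding c_def by (simp add: mod_eq_dvd_iff)
        hence "ch W H (K0 a) mod p = cnt b a es Us (K0 a) mod p" by (metis of_nat_mod of_nat_eq_iff)
        also have "cnt b a es Us (K0 a) = f" unfolding f_def by (rule cnt_K0[OF b a ve vs])
        finally show False using False fp f_def by simp
      qed
      have sub: "int ` B \<subseteq> {x\<in>{0..<int p}. int p dvd (\<Sum>k<NC. c k * x^k)}"
      proof
        fix x assume "x \<in> int ` B"
        then obtain r where r: "r \<in> B" "x = int r" by auto
        have rp: "r < p" and Fr: "F r \<notin> {Some f, None}" using r(1) unfolding B_def by auto
        have "ac (hfold p a W (NC*W) H (sfold p b a (iec_stream es Us) (vinit b r)))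
            = checkv p b (hfold p a W (NC*W) H (sfold p b a (iec_stream es Us) (vinit b r)))"
          using Fr hs[of r] unfolding F_def vout_def by (auto split: if_splits)
        hence "(\<Sum>k<NC. ch W H k * r ^ k) mod p = (\<Sum>k<NC. cnt b a es Us k * r ^ k) mod p"
          using hs[of r] cnt_poly[OF a0] unfolding NC_def by simp
        hence "int p dvd int (\<Sum>k<NC. ch W H k * r ^ k) - int (\<Sum>k<NC. cnt b a es Us k * r ^ k)"
          by (rule nat_mod_eq_int_dvd)
        also have "int (\<Sum>k<NC. ch W H k * r ^ k) - int (\<Sum>k<NC. cnt b a es Us k * r ^ k) = (\<Sum>k<NC. c k * x^k)"
          unfolding c_def r(2) by (simp add: of_nat_sum sum_subtractf left_diff_distrib)
        finally show "x \<in> {x\<in>{0..<int p}. int p dvd (\<Sum>k<NC. c k * x^k)}" using rp r(2) by simp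
      qed
      have pi: "prime (int p)" using p by simp
      have "card B = card (int ` B)" by (simp add: card_image)
      also have "\<dots> \<le> card {x\<in>{0..<int p}. int p dvd (\<Sum>k<NC. c k * x^k)}"
      proof (rule card_mono[OF _ sub])
        show "finite {x\<in>{0..<int p}. int p dvd (\<Sum>k<NC. c k * x^k)}"
          by (rule finite_subset[of _ "{0..<int p}"]) auto
      qed
      also have "\<dots> \<le> NC - 1" using roots_mod_p_sum[of "int p" "K0 a" NC c] pi K nd by blast
      finally show ?thesis .
    qed
  qed
  thus ?thesis unfolding B_def F_def f_def NC_def .
qed

lemma space_mono: "space_bounded V s \<Longrightarrow> s \<le> s' \<Longrightarrow> space_bounded V s'"
  unfolding space_bounded_def by (meson order_trans)

lemma prob_map_pmf_of_set:
  assumes "finite A" "A \<noteq> {}"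
  shows "measure_pmf.prob (map_pmf F (pmf_of_set A)) X = card {r\<in>A. F r \<in> X} / card A"
proof -
  have "measure_pmf.prob (map_pmf F (pmf_of_set A)) X = measure_pmf.prob (pmf_of_set A) (F -` X)" by simp
  also have "\<dots> = card (A \<inter> F -` X) / card A" using assms by (simp add: measure_pmf_of_set)
  also have "A \<inter> F -` X = {r\<in>A. F r \<in> X}" by auto
  finally show ?thesis .
qed

lemma main_scheme:
  fixes n :: nat and h v :: real and d :: nat
  assumes n: "n \<ge> 2" and h: "h \<ge> 1" and v: "v \<ge> 1" and hv: "h * v = (real n)^2"
  shows "\<exists>V P. iec_scheme n (n ^ d) (120 * (2 * real d + 20) * h * (log 2 n) ^ 1) (120 * (2 * real d + 20) * v * (log 2 n) ^ 1) V P"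
proof -
  define b where "b = nat \<lfloor>sqrt v\<rfloor>"
  define a where "a = n div b + 1"
  define t where "t = nat \<lceil>log 2 (real n)\<rceil> + 1"
  define W where "W = (2*d+20)*t"
  define NC where "NC = 4*a*a"
  define L where "L = NC * W"
  define K where "K = W * (4 + 2*b + 2*(b*b))"
  define M where "M = n^(d+8)"
  define cc where "cc = 120 * (2 * real d + 20)"
  note pr = params[OF n h v hv, folded b_def, folded a_def t_def]
  have b0: "b > 0" and bb: "real (b*b) \<le> v" and NCh: "real NC \<le> 40*h" and NCn: "NC \<le> 16*(n*n)"
    and nt: "2*n \<le> 2^t" and t2: "t \<ge> 2" and tl: "real t \<le> 3 * log 2 (real n)"
    using pr unfolding NC_def by auto
  have W0: "W > 0" unfolding W_def using t2 by simp
  have M7: "M \<ge> 7"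
  proof -
    have "(2::nat)^(d+8) \<le> n^(d+8)" using n by (intro power_mono) auto
    moreover have "(7::nat) \<le> 2^(d+8)"
    proof -
      have "(7::nat) \<le> 2^8" by simp
      also have "\<dots> \<le> 2^(d+8)" by (intro power_increasing) auto
      finally show ?thesis .
    qed
    ultimately show ?thesis unfolding M_def by linarith
  qed
  obtain p where p: "prime p" "M < p" "p \<le> 2 * M^2" using prime_in_range[OF M7] by blast
  note pb = pow_bounds[OF n t2 nt NCn, of d, folded W_def]
  have pW: "p \<le> 2^W"
  proof -
    have "M^2 = n^((d+8)*2)" unfolding M_def by (rule power_mult[symmetric])
    also have "(d+8)*2 = 2*d+16" by simp
    finally have "2 * M^2 = 2 * n^(2*d+16)" by simp
    thus ?thesis using p(3) pb(1) by linarith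
  qed
  have LW: "L + 2 \<le> 2^W" unfolding L_def using pb(2) .
  have p0: "p > 0" using p(1) prime_gt_0_nat by blast
  define S where "S = SS p b L W"
  have fS: "finite S" and cS: "card S \<le> 2^K"
    using SS_finite_card[OF pW LW, of b] unfolding S_def K_def by auto
  define T where "T = {xs :: bool list. set xs \<subseteq> UNIV \<and> length xs = K}"
  have fT: "finite T" unfolding T_def by (rule finite_lists_length_eq) simp
  have cT: "card T = 2^K" unfolding T_def using card_lists_length_eq[of "UNIV :: bool set" K] by simp
  obtain enc where enc: "enc ` S \<subseteq> T" "inj_on enc S"
    using card_le_inj[OF fS fT] cS cT by auto
  have encS: "enc ` S \<subseteq> {xs. length xs = K}" using enc(1) unfolding T_def by auto
  have cl1: "\<And>t s. s \<in> S \<Longrightarrow> sstep p b a t s \<in> S" unfolding S_def using sstep_SS[OF p0 b0] by blast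
  have cl2: "\<And>c s. s \<in> S \<Longrightarrow> hstep p a W L c s \<in> S" unfolding S_def using hstep_SS[OF p0] by blast
  have ini: "\<And>r. r < p \<Longrightarrow> vinit b r \<in> S" unfolding S_def by (rule vinit_SS)
  define V where "V = mkV enc S p b a W L"
  have VR: "v_result V \<sigma> H = map_pmf (\<lambda>r. vout p b L (hfold p a W L H (sfold p b a \<sigma> (vinit b r)))) (pmf_of_set {..<p})"
    for \<sigma> H unfolding V_def by (rule v_result_mkV[OF enc(2) p0 cl1 cl2 ini])
  define sel where "sel \<sigma> = (SOME x. valid_edges n (fst x) \<and> valid_sets n (snd x) \<and> length (snd x) \<le> n^d \<and> \<sigma> = iec_stream (fst x) (snd x))" for \<sigma>
  define P where "P \<sigma> = hon W NC (cnt b a (fst (sel \<sigma>)) (snd (sel \<sigma>)))" for \<sigma>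
  have lenP: "length (P \<sigma>) = L" for \<sigma> unfolding P_def hon_def L_def by simp
  have logn: "log 2 (real n) \<ge> 1" using n by simp
  have Kle: "real K \<le> cc * v * log 2 (real n) ^ 1"
  proof -
    have "b \<le> b*b" using b0 by simp
    hence "real b \<le> real (b*b)" by (simp only: of_nat_le_iff)
    hence b1: "real b \<le> v" using bb by linarith
    have "real (4 + 2*b + 2*(b*b)) \<le> 8 * v" using b1 bb v by simp
    moreover have "real W \<le> (2*real d + 20) * (3 * log 2 (real n))"
      unfolding W_def using tl by (simp add: mult_left_mono)
    ultimately have "real K \<le> ((2*real d + 20) * (3 * log 2 (real n))) * (8 * v)"
      unfolding K_def of_nat_mult using logn by (intro mult_mono) auto
    also have "\<dots> \<le> cc * v * log 2 (real n)" unfolding cc_def using logn v by (simp add: algebra_simps)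
    finally show ?thesis by simp
  qed
  have sp: "space_bounded V (cc * v * log 2 (real n) ^ 1)"
    unfolding V_def by (rule space_mono[OF space_mkV[OF encS ini[OF p0] ini p0] Kle])
  have Lle: "real L \<le> cc * h * log 2 (real n) ^ 1"
  proof -
    have "real W \<le> (2*real d + 20) * (3 * log 2 (real n))"
      unfolding W_def using tl by (simp add: mult_left_mono)
    hence "real L \<le> (40*h) * ((2*real d + 20) * (3 * log 2 (real n)))"
      unfolding L_def of_nat_mult using NCh logn by (intro mult_mono) auto
    also have "\<dots> = cc * h * log 2 (real n)" unfolding cc_def by (simp add: algebra_simps)
    finally show ?thesis by simp
  qed
  have main: "let \<sigma> = iec_stream es Us; f = iec_value es Us in
          real (length (P \<sigma>)) \<le> cc * h * log 2 (real n) ^ 1 \<and>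
          measure_pmf.prob (v_result V \<sigma> (P \<sigma>)) {Some f} = 1 \<and>
          (\<forall>H. measure_pmf.prob (v_result V \<sigma> H) {r. r \<noteq> Some f \<and> r \<noteq> None} \<le> 1/3)"
    if ve: "valid_edges n es" and vs: "valid_sets n Us" and lu: "length Us \<le> n^d" for es Us
  proof -
    define \<sigma> where "\<sigma> = iec_stream es Us"
    define f where "f = iec_value es Us"
    have cntb: "cnt b a es' Us' k \<le> n^(d+4)" if "valid_edges n es'" "valid_sets n Us'" "length Us' \<le> n^d" for es' Us' k
    proof -
      have "cnt b a es' Us' k \<le> n*n*(length Us'*(n*n))" by (rule cnt_le[OF that(1,2)])
      also have "\<dots> \<le> n*n*(n^d*(n*n))" using that(3) by (intro mult_le_mono) auto
      also have "\<dots> = n^d * (n*n*(n*n))" by (simp add: mult_ac)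
      also have "\<dots> = n^(d+4)" unfolding power_add by (simp add: eval_nat_numeral mult_ac)
      finally show ?thesis .
    qed
    have cntW: "cnt b a es' Us' k < 2^W" if "valid_edges n es'" "valid_sets n Us'" "length Us' \<le> n^d" for es' Us' k
      using cntb[OF that, of k] pb(3) by linarith
    have fp': "iec_value es' Us' < p" if "valid_edges n es'" "valid_sets n Us'" "length Us' \<le> n^d" for es' Us'
    proof -
      have "iec_value es' Us' = cnt b a es' Us' (K0 a)" using cnt_K0[OF b0 a_def that(1,2)] by simp
      also have "\<dots> \<le> n^(d+4)" by (rule cntb[OF that])
      also have "\<dots> \<le> M" unfolding M_def using n by (intro power_increasing) auto
      finally show ?thesis using p(2) by linarith
    qed
    have fp: "f < p" unfolding f_def by (rule fp'[OF ve vs lu])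
    have ex: "\<exists>x. valid_edges n (fst x) \<and> valid_sets n (snd x) \<and> length (snd x) \<le> n^d \<and> \<sigma> = iec_stream (fst x) (snd x)"
      using ve vs lu \<sigma>_def by (intro exI[of _ "(es, Us)"]) simp
    have s: "valid_edges n (fst (sel \<sigma>))" "valid_sets n (snd (sel \<sigma>))" "length (snd (sel \<sigma>)) \<le> n^d"
      "\<sigma> = iec_stream (fst (sel \<sigma>)) (snd (sel \<sigma>))"
      using someI_ex[OF ex] unfolding sel_def by auto
    have fsel: "iec_value (fst (sel \<sigma>)) (snd (sel \<sigma>)) = f"
      unfolding f_def using iec_value_det[of "fst (sel \<sigma>)" "snd (sel \<sigma>)" es Us] s(4) \<sigma>_def by simp
    have ne: "{..<p} \<noteq> {}" using p0 by auto
    have comp: "vout p b L (hfold p a W L (P \<sigma>) (sfold p b a \<sigma> (vinit b r))) = Some f" for r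
    proof -
      have "vout p b (4*a*a*W) (hfold p a W (4*a*a*W) (hon W (4*a*a) (cnt b a (fst (sel \<sigma>)) (snd (sel \<sigma>))))
          (sfold p b a (iec_stream (fst (sel \<sigma>)) (snd (sel \<sigma>))) (vinit b r))) = Some (iec_value (fst (sel \<sigma>)) (snd (sel \<sigma>)))"
        by (rule completeness_core[OF b0 a_def W0 s(1,2) cntW[OF s(1-3)] fp'[OF s(1-3)]])
      thus ?thesis unfolding P_def L_def NC_def fsel s(4)[symmetric] .
    qed
    have pr1: "measure_pmf.prob (v_result V \<sigma> (P \<sigma>)) {Some f} = 1"
      unfolding VR using comp ne p0 by (simp add: prob_map_pmf_of_set)
    have pr2: "measure_pmf.prob (v_result V \<sigma> H) {r. r \<noteq> Some f \<and> r \<noteq> None} \<le> 1/3" for H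
    proof -
      have "measure_pmf.prob (v_result V \<sigma> H) {r. r \<noteq> Some f \<and> r \<noteq> None}
          = card {r\<in>{..<p}. vout p b L (hfold p a W L H (sfold p b a \<sigma> (vinit b r))) \<in> {r. r \<noteq> Some f \<and> r \<noteq> None}} / card {..<p}"
        unfolding VR by (rule prob_map_pmf_of_set) (use ne in auto)
      also have "{r\<in>{..<p}. vout p b L (hfold p a W L H (sfold p b a \<sigma> (vinit b r))) \<in> {r. r \<noteq> Some f \<and> r \<noteq> None}}
          = {r\<in>{..<p}. vout p b (4*a*a*W) (hfold p a W (4*a*a*W) H (sfold p b a (iec_stream es Us) (vinit b r))) \<notin> {Some (iec_value es Us), None}}"
        unfolding L_def NC_def \<sigma>_def f_def by auto
      also have "card \<dots> \<le> 4*a*a - 1" by (rule soundness_core[OF p(1) b0 a_def W0 ve vs fp[unfolded f_def]])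
      finally have le: "measure_pmf.prob (v_result V \<sigma> H) {r. r \<noteq> Some f \<and> r \<noteq> None} \<le> real (4*a*a - 1) / real p"
        using p0 by (simp add: divide_right_mono)
      have "3 * (4*a*a - 1) \<le> 48 * (n*n)" using NCn unfolding NC_def by simp
      also have "48 * (n*n) \<le> n^6 * (n*n)"
      proof -
        have "(48::nat) \<le> 2^6" by simp
        also have "\<dots> \<le> n^6" using n by (intro power_mono) auto
        finally show ?thesis by (intro mult_le_mono1)
      qed
      also have "n^6 * (n*n) = n^8"
      proof -
        have "n^8 = n^6 * n^2" by (simp flip: power_add)
        thus ?thesis by (simp add: power2_eq_square)
      qed
      also have "n^8 \<le> M" unfolding M_def using n by (intro power_increasing) auto
      also have "M \<le> p" using p(2) by simp
      finally have "3 * (4*a*a - 1) \<le> p" .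
      hence "real (4*a*a - 1) / real p \<le> 1/3" using p0 by (simp add: divide_simps)
      thus ?thesis using le by linarith
    qed
    show ?thesis unfolding Let_def \<sigma>_def[symmetric] f_def[symmetric] using lenP Lle pr1 pr2 by simp
  qed
  have "iec_scheme n (n ^ d) (cc * h * log 2 (real n) ^ 1) (cc * v * log 2 (real n) ^ 1) V P"
    unfolding iec_scheme_def using sp main by blast
  thus ?thesis unfolding cc_def by blast
qed

theorem lemma3p1:
  shows "\<forall>d::nat. \<exists>(c::real) (k::nat). c > 0 \<and>
    (\<forall>n::nat. \<forall>h v :: real. n \<ge> 2 \<longrightarrow> h \<ge> 1 \<longrightarrow> v \<ge> 1 \<longrightarrow> h * v = (real n)^2 \<longrightarrow>
      (\<exists>V P. iec_scheme n (n ^ d) (c * h * (log 2 n) ^ k) (c * v * (log 2 n) ^ k) V P))"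
proof
  fix d :: nat
  show "\<exists>(c::real) (k::nat). c > 0 \<and>
    (\<forall>n::nat. \<forall>h v :: real. n \<ge> 2 \<longrightarrow> h \<ge> 1 \<longrightarrow> v \<ge> 1 \<longrightarrow> h * v = (real n)^2 \<longrightarrow>
      (\<exists>V P. iec_scheme n (n ^ d) (c * h * (log 2 n) ^ k) (c * v * (log 2 n) ^ k) V P))"
  proof (rule exI[of _ "120 * (2 * real d + 20)"], rule exI[of _ 1], intro conjI allI impI)
    show "(0::real) < 120 * (2 * real d + 20)" by simp
    fix n :: nat and h v :: real
    assume "n \<ge> 2" "h \<ge> 1" "v \<ge> 1" "h * v = (real n)^2"
    thus "\<exists>V P. iec_scheme n (n ^ d) (120 * (2 * real d + 20) * h * (log 2 n) ^ 1) (120 * (2 * real d + 20) * v * (log 2 n) ^ 1) V P"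
      by (rule main_scheme)
  qed
qed

end
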